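(* Let $M$ be a Kokotsakis mesh with planar faces whose central face is a (non-degenerate) triangle $A_1A_2A_3$, in general position in the following sense: for each $i$, $v_i,w_i$ are not collinear and $a_{i-1},a_i$ do not lie in the plane spanned by $v_i,w_i$; the lines $l_1,l_2,l_3$ are pairwise non-parallel, the points $B_1,B_2,B_3$ are not collinear, and $A_i\notin\{B_{i-1},B_i\}$. Then $M$ is not infinitesimally flexible (and hence not flexible).
   Context: A Kokotsakis mesh with central $n$-gon consists of a central face with vertices $A_1,\dots,A_n$ (indices in $\mathbb Z/n\mathbb Z$) and points $V_i,W_i$ such that at each $A_i$ exactly four faces meet, containing the angles $A_{i+1}A_iA_{i-1}$ (central face), $A_{i-1}A_iV_i$, $V_iA_iW_i$, $W_iA_iA_{i+1}$; the face containing $W_iA_iA_{i+1}$ also contains $A_iA_{i+1}V_{i+1}$. Put $a_i=A_{i+1}-A_i$, $v_i=V_i-A_i$, $w_i=W_i-A_i$. $l_i$ is the intersection line of the plane of the central face with the plane through $A_i,V_i,W_i$, and $B_i=l_i\cap l_{i+1}$. Infinitesimally flexible: there is a nonzero infinitesimal isometric deformation with the central face fixed (each face moves infinitesimally rigidly). Flexible: there is a continuous non-constant family of meshes starting at $M$, with the central face fixed, in which each face stays congruent to its initial position. *)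

theory Defs
  imports "HOL-Analysis.Analysis"
begin

text \<open>Indices are 0,1,2 (read modulo 3).
  A mesh is given by point functions A V W :: nat \<Rightarrow> real^3 (only 0,1,2 matter).
  Faces: the central face A0 A1 A2; for each i the side face through
  A i, A (i+1), V (i+1), W i (the face containing the angles W_i A_i A_{i+1} and
  A_i A_{i+1} V_{i+1}); the corner face at A i through V i, A i, W i.\<close>

definition nx :: "nat \<Rightarrow> nat" where "nx i = (i + 1) mod 3"
definition pv :: "nat \<Rightarrow> nat" where "pv i = (i + 2) mod 3"

text \<open>Planar faces (the side faces are quadrilaterals that must be planar;
  the central face and the corner angles are planar automatically).\<close>
definition planar_faces :: "(nat \<Rightarrow> real^3) \<Rightarrow> (nat \<Rightarrow> real^3) \<Rightarrow> (nat \<Rightarrow> real^3) \<Rightarrow> bool" where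
  "planar_faces A V W \<longleftrightarrow> (\<forall>i<3. coplanar {A i, A (nx i), V (nx i), W i})"

definition inf_rigid :: "((real^3) \<times> (real^3)) list \<Rightarrow> bool" where
  "inf_rigid ps \<longleftrightarrow> (\<exists>\<omega> \<tau>. \<forall>(p, u) \<in> set ps. u = cross3 \<omega> p + \<tau>)"

text \<open>Infinitesimal isometric deformation with the central face fixed: velocities 0 at
  the A i, velocities dV i, dW i at V i, W i, each face moving infinitesimally rigidly.\<close>
definition inf_isometric_deformation ::
  "(nat \<Rightarrow> real^3) \<Rightarrow> (nat \<Rightarrow> real^3) \<Rightarrow> (nat \<Rightarrow> real^3) \<Rightarrow> (nat \<Rightarrow> real^3) \<Rightarrow> (nat \<Rightarrow> real^3) \<Rightarrow> bool" where
  "inf_isometric_deformation A V W dV dW \<longleftrightarrow>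
     (\<forall>i<3. inf_rigid [(A i, 0), (A (nx i), 0), (V (nx i), dV (nx i)), (W i, dW i)]
          \<and> inf_rigid [(V i, dV i), (A i, 0), (W i, dW i)])"

definition inf_flexible :: "(nat \<Rightarrow> real^3) \<Rightarrow> (nat \<Rightarrow> real^3) \<Rightarrow> (nat \<Rightarrow> real^3) \<Rightarrow> bool" where
  "inf_flexible A V W \<longleftrightarrow>
     (\<exists>dV dW. inf_isometric_deformation A V W dV dW \<and> (\<exists>i<3. dV i \<noteq> 0 \<or> dW i \<noteq> 0))"

definition face_congruent :: "((real^3) \<times> (real^3)) list \<Rightarrow> bool" where
  "face_congruent ps \<longleftrightarrow>
     (\<exists>f :: real^3 \<Rightarrow> real^3. (\<forall>x y. dist (f x) (f y) = dist x y) \<and> (\<forall>(p, q) \<in> set ps. f p = q))"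

definition flexible :: "(nat \<Rightarrow> real^3) \<Rightarrow> (nat \<Rightarrow> real^3) \<Rightarrow> (nat \<Rightarrow> real^3) \<Rightarrow> bool" where
  "flexible A V W \<longleftrightarrow>
     (\<exists>(\<epsilon>::real) (Vt :: real \<Rightarrow> nat \<Rightarrow> real^3) (Wt :: real \<Rightarrow> nat \<Rightarrow> real^3).
        \<epsilon> > 0 \<and>
        (\<forall>i<3. continuous_on {0..\<epsilon>} (\<lambda>s. Vt s i) \<and> continuous_on {0..\<epsilon>} (\<lambda>s. Wt s i)) \<and>
        (\<forall>i<3. Vt 0 i = V i \<and> Wt 0 i = W i) \<and>
        (\<forall>s\<in>{0..\<epsilon>}. \<forall>i<3.
            face_congruent [(A i, A i), (A (nx i), A (nx i)), (V (nx i), Vt s (nx i)), (W i, Wt s i)]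
          \<and> face_congruent [(V i, Vt s i), (A i, A i), (W i, Wt s i)]) \<and>
        (\<exists>s\<in>{0..\<epsilon>}. \<exists>i<3. Vt s i \<noteq> V i \<or> Wt s i \<noteq> W i))"

definition lline :: "(nat \<Rightarrow> real^3) \<Rightarrow> (nat \<Rightarrow> real^3) \<Rightarrow> (nat \<Rightarrow> real^3) \<Rightarrow> nat \<Rightarrow> (real^3) set" where
  "lline A V W i = affine hull {A 0, A 1, A 2} \<inter> affine hull {A i, V i, W i}"

definition lines_parallel :: "(real^3) set \<Rightarrow> (real^3) set \<Rightarrow> bool" where
  "lines_parallel L M \<longleftrightarrow> (\<exists>c. M = (\<lambda>x. c + x) ` L)"

definition Bpt :: "(nat \<Rightarrow> real^3) \<Rightarrow> (nat \<Rightarrow> real^3) \<Rightarrow> (nat \<Rightarrow> real^3) \<Rightarrow> nat \<Rightarrow> real^3" where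
  "Bpt A V W i = (THE p. p \<in> lline A V W i \<inter> lline A V W (nx i))"

end

theory Submission
  imports Defs
begin
unbundle cross3_syntax


lemma cross_cross_l:
  fixes x y z :: "real^3"
  shows "(x \<times> y) \<times> z = (x \<bullet> z) *\<^sub>R y - (y \<bullet> z) *\<^sub>R x"
  unfolding vec_eq_iff forall_3 cross3_def inner_vec_def sum_3 vector_3 
  by (simp add: vector_3) (simp add: algebra_simps)

lemma decomp3:
  fixes x y u :: "real^3"
  shows "((x \<times> y) \<bullet> (x \<times> y)) *\<^sub>R u = (u \<bullet> (x \<times> y)) *\<^sub>R (x \<times> y)
     + ((x \<bullet> u) * (y \<bullet> y) - (y \<bullet> u) * (x \<bullet> y)) *\<^sub>R x
     + ((y \<bullet> u) * (x \<bullet> x) - (x \<bullet> u) * (x \<bullet> y)) *\<^sub>R y"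
proof -
  let ?m = "x \<times> y"
  have 1: "(?m \<times> u) \<times> ?m = (?m \<bullet> ?m) *\<^sub>R u - (u \<bullet> ?m) *\<^sub>R ?m"
    by (rule cross_cross_l)
  have 2: "?m \<times> u = (x \<bullet> u) *\<^sub>R y - (y \<bullet> u) *\<^sub>R x" by (rule cross_cross_l)
  have 3: "y \<times> ?m = (y \<bullet> y) *\<^sub>R x - (x \<bullet> y) *\<^sub>R y"
    by (metis cross_cross_l cross_skew minus_diff_eq inner_commute)
  have 4: "x \<times> ?m = (x \<bullet> y) *\<^sub>R x - (x \<bullet> x) *\<^sub>R y"
    by (metis cross_cross_l cross_skew minus_diff_eq inner_commute)
  have "(?m \<bullet> ?m) *\<^sub>R u = (u \<bullet> ?m) *\<^sub>R ?m + (?m \<times> u) \<times> ?m" using 1 by simp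
  also have "(?m \<times> u) \<times> ?m = (x \<bullet> u) *\<^sub>R (y \<times> ?m) - (y \<bullet> u) *\<^sub>R (x \<times> ?m)"
    unfolding 2 by (simp add: Cross3.left_diff_distrib cross_mult_left)
  finally show ?thesis unfolding 3 4 by (simp add: algebra_simps)
qed

lemma notspan:
  fixes a v w :: "real^3"
  assumes "\<not> collinear {0, v, w}" "a \<notin> span {v, w}"
  shows "a \<bullet> (v \<times> w) \<noteq> 0"
proof
  assume h: "a \<bullet> (v \<times> w) = 0"
  have m: "v \<times> w \<noteq> 0" using assms(1) cross_eq_0 by blast
  then have mm: "(v \<times> w) \<bullet> (v \<times> w) \<noteq> 0" by simp
  have e: "((v \<times> w) \<bullet> (v \<times> w)) *\<^sub>R a = ((v \<bullet> a) * (w \<bullet> w) - (w \<bullet> a) * (v \<bullet> w)) *\<^sub>R v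
     + ((w \<bullet> a) * (v \<bullet> v) - (v \<bullet> a) * (v \<bullet> w)) *\<^sub>R w"
    using decomp3[of v w a] h by simp
  have "a = (1 / ((v \<times> w) \<bullet> (v \<times> w))) *\<^sub>R (((v \<times> w) \<bullet> (v \<times> w)) *\<^sub>R a)"
    using mm by simp
  also have "\<dots> \<in> span {v, w}" unfolding e
    by (intro span_mul span_add span_base) simp_all
  finally show False using assms(2) by simp
qed

lemma inplane:
  fixes x y u :: "real^3"
  assumes "x \<times> y \<noteq> 0" "u \<bullet> (x \<times> y) = 0"
  shows "\<exists>c1 c2. u = c1 *\<^sub>R x + c2 *\<^sub>R y"
proof -
  let ?m = "x \<times> y"
  have mm: "?m \<bullet> ?m \<noteq> 0" using assms by simp
  have e: "(?m \<bullet> ?m) *\<^sub>R u = ((x \<bullet> u) * (y \<bullet> y) - (y \<bullet> u) * (x \<bullet> y)) *\<^sub>R x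
     + ((y \<bullet> u) * (x \<bullet> x) - (x \<bullet> u) * (x \<bullet> y)) *\<^sub>R y"
    using decomp3[of x y u] assms(2) by simp
  have "u = (1 / (?m \<bullet> ?m)) *\<^sub>R ((?m \<bullet> ?m) *\<^sub>R u)" using mm by simp
  also have "\<dots> = (((x \<bullet> u) * (y \<bullet> y) - (y \<bullet> u) * (x \<bullet> y)) / (?m \<bullet> ?m)) *\<^sub>R x
     + (((y \<bullet> u) * (x \<bullet> x) - (x \<bullet> u) * (x \<bullet> y)) / (?m \<bullet> ?m)) *\<^sub>R y"
    unfolding e by (simp add: scaleR_add_right)
  finally show ?thesis by blast
qed

lemma plane_char:
  fixes p q r :: "real^3"
  assumes "(q - p) \<times> (r - p) \<noteq> 0"
  shows "affine hull {p, q, r} = {x. (x - p) \<bullet> ((q - p) \<times> (r - p)) = 0}"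
proof (intro set_eqI iffI)
  fix x assume "x \<in> affine hull {p, q, r}"
  then obtain u v w where x: "x = u *\<^sub>R p + v *\<^sub>R q + w *\<^sub>R r" "u + v + w = 1"
    unfolding affine_hull_3 by blast
  have "x - p = v *\<^sub>R (q - p) + w *\<^sub>R (r - p)"
  proof -
    have u: "u = 1 - v - w" using x(2) by simp
    show ?thesis unfolding x(1) u by (simp add: algebra_simps)
  qed
  then show "x \<in> {x. (x - p) \<bullet> ((q - p) \<times> (r - p)) = 0}"
    by (simp add: inner_add_left dot_cross_self)
next
  fix x assume "x \<in> {x. (x - p) \<bullet> ((q - p) \<times> (r - p)) = 0}"
  then have h: "(x - p) \<bullet> ((q - p) \<times> (r - p)) = 0" by simp
  obtain c1 c2 where "x - p = c1 *\<^sub>R (q - p) + c2 *\<^sub>R (r - p)"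
    using inplane[OF assms h] by blast
  then have "x = (1 - c1 - c2) *\<^sub>R p + c1 *\<^sub>R q + c2 *\<^sub>R r"
    by (simp add: algebra_simps)
  then have "\<exists>u v w. x = u *\<^sub>R p + v *\<^sub>R q + w *\<^sub>R r \<and> u + v + w = 1"
    by (intro exI[of _ "1 - c1 - c2"] exI[of _ c1] exI[of _ c2]) simp
  then show "x \<in> affine hull {p, q, r}" unfolding affine_hull_3 by blast
qed

lemma perp2:
  fixes n N u y M :: "real^3"
  assumes "n \<times> N \<noteq> 0" "u \<noteq> 0" "u \<bullet> n = 0" "u \<bullet> N = 0" "y \<bullet> n = 0" "y \<bullet> N = 0" "u \<bullet> M = 0"
  shows "y \<bullet> M = 0"
proof -
  define m where "m = n \<times> N"
  have m0: "m \<noteq> 0" using assms(1) m_def by simp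
  have a1: "n \<bullet> y = 0" "N \<bullet> y = 0" "n \<bullet> u = 0" "N \<bullet> u = 0"
    using assms(3-6) by (simp_all only: inner_commute)
  have my: "m \<times> y = 0" unfolding m_def cross_cross_l a1 by simp
  have mu: "m \<times> u = 0" unfolding m_def cross_cross_l a1 by simp
  have ey: "(m \<bullet> m) *\<^sub>R y = (y \<bullet> m) *\<^sub>R m"
    using cross_cross_l[of m y m] unfolding my by simp
  have eu: "(m \<bullet> m) *\<^sub>R u = (u \<bullet> m) *\<^sub>R m"
    using cross_cross_l[of m u m] unfolding mu by simp
  have mm: "m \<bullet> m \<noteq> 0" using m0 by simp
  have um: "u \<bullet> m \<noteq> 0"
  proof
    assume "u \<bullet> m = 0"
    then have "(m \<bullet> m) *\<^sub>R u = 0" using eu by simp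
    then show False using mm assms(2) by simp
  qed
  have "((m \<bullet> m) *\<^sub>R u) \<bullet> M = ((u \<bullet> m) *\<^sub>R m) \<bullet> M" using eu by simp
  then have "(u \<bullet> m) * (m \<bullet> M) = 0" using assms(7) by simp
  then have mM: "m \<bullet> M = 0" using um by simp
  have "((m \<bullet> m) *\<^sub>R y) \<bullet> M = ((y \<bullet> m) *\<^sub>R m) \<bullet> M" using ey by simp
  then have "(m \<bullet> m) * (y \<bullet> M) = 0" using mM by simp
  then show ?thesis using mm by simp
qed

lemma par_lines:
  fixes n Ni Nj u Ai Aj p0 :: "real^3"
  assumes "u \<noteq> 0" "u \<bullet> n = 0" "u \<bullet> Ni = 0" "u \<bullet> Nj = 0" "n \<times> Ni \<noteq> 0" "n \<times> Nj \<noteq> 0"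
    "(Ai - p0) \<bullet> n = 0" "(Aj - p0) \<bullet> n = 0"
  shows "lines_parallel {x. (x - p0) \<bullet> n = 0 \<and> (x - Ai) \<bullet> Ni = 0} {x. (x - p0) \<bullet> n = 0 \<and> (x - Aj) \<bullet> Nj = 0}"
  unfolding lines_parallel_def
proof (rule exI[of _ "Aj - Ai"], intro set_eqI iffI)
  fix x assume "x \<in> {x. (x - p0) \<bullet> n = 0 \<and> (x - Aj) \<bullet> Nj = 0}"
  then have h: "(x - p0) \<bullet> n = 0" "(x - Aj) \<bullet> Nj = 0" by auto
  have xn: "(x - Aj) \<bullet> n = 0" using h(1) assms(7,8) by (simp add: inner_diff_left)
  have "(x - Aj) \<bullet> Ni = 0"
    by (rule perp2[OF assms(6) assms(1) assms(2) assms(4) xn h(2) assms(3)])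
  moreover have "(x - (Aj - Ai) - p0) \<bullet> n = 0" using h(1) assms(7,8) by (simp add: inner_diff_left)
  moreover have "x - (Aj - Ai) - Ai = x - Aj" by simp
  ultimately have "x - (Aj - Ai) \<in> {x. (x - p0) \<bullet> n = 0 \<and> (x - Ai) \<bullet> Ni = 0}" by simp
  then show "x \<in> (\<lambda>x. (Aj - Ai) + x) ` {x. (x - p0) \<bullet> n = 0 \<and> (x - Ai) \<bullet> Ni = 0}"
    by (rule rev_image_eqI) simp
next
  fix y assume "y \<in> (\<lambda>x. (Aj - Ai) + x) ` {x. (x - p0) \<bullet> n = 0 \<and> (x - Ai) \<bullet> Ni = 0}"
  then obtain x where y: "y = (Aj - Ai) + x" and h: "(x - p0) \<bullet> n = 0" "(x - Ai) \<bullet> Ni = 0" by auto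
  have xn: "(x - Ai) \<bullet> n = 0" using h(1) assms(7,8) by (simp add: inner_diff_left)
  have "(x - Ai) \<bullet> Nj = 0"
    by (rule perp2[OF assms(5) assms(1) assms(2) assms(3) xn h(2) assms(4)])
  moreover have "y - Aj = x - Ai" using y by simp
  moreover have "(y - p0) \<bullet> n = 0" using y h(1) assms(7,8) by (simp add: inner_diff_left inner_add_left)
  ultimately show "y \<in> {x. (x - p0) \<bullet> n = 0 \<and> (x - Aj) \<bullet> Nj = 0}" by simp
qed

lemma nN_lemma:
  fixes n N a :: "real^3"
  assumes "n \<noteq> 0" "a \<bullet> n = 0" "a \<bullet> N \<noteq> 0"
  shows "n \<times> N \<noteq> 0"
proof
  assume h: "n \<times> N = 0"
  have "(n \<times> N) \<times> n = (n \<bullet> n) *\<^sub>R N - (N \<bullet> n) *\<^sub>R n" by (rule cross_cross_l)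
  then have e: "(n \<bullet> n) *\<^sub>R N = (N \<bullet> n) *\<^sub>R n" using h by simp
  have "a \<bullet> ((n \<bullet> n) *\<^sub>R N) = a \<bullet> ((N \<bullet> n) *\<^sub>R n)" using e by simp
  then have "(n \<bullet> n) * (a \<bullet> N) = 0" using assms(2) by simp
  then show False using assms by simp
qed

lemma ncol_cross:
  fixes p q r :: "real^3"
  assumes "\<not> collinear {p, q, r}"
  shows "(q - p) \<times> (r - p) \<noteq> 0"
proof -
  have "collinear {q, p, r} \<longleftrightarrow> collinear {0, q - p, r - p}"
    by (rule collinear_3) simp
  moreover have "{q, p, r} = {p, q, r}" by auto
  ultimately show ?thesis using assms cross_eq_0 by metis
qed



lemma geom:
  fixes A V W :: "nat \<Rightarrow> real^3"
  assumes nondeg: "\<not> collinear {A 0, A 1, A 2}"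
    and vw: "\<forall>i<3. \<not> collinear {0, V i - A i, W i - A i}"
    and a_prev: "\<forall>i<3. A i - A (pv i) \<notin> span {V i - A i, W i - A i}"
    and a_next: "\<forall>i<3. A (nx i) - A i \<notin> span {V i - A i, W i - A i}"
    and nonpar: "\<forall>i<3. \<forall>j<3. i \<noteq> j \<longrightarrow> \<not> lines_parallel (lline A V W i) (lline A V W j)"
    and B_noncol: "\<not> collinear {Bpt A V W 0, Bpt A V W 1, Bpt A V W 2}"
  shows "((A 0 - A 2) \<bullet> ((V 0 - A 0) \<times> (W 0 - A 0))) * ((A 1 - A 0) \<bullet> ((V 1 - A 1) \<times> (W 1 - A 1)))
           * ((A 2 - A 1) \<bullet> ((V 2 - A 2) \<times> (W 2 - A 2)))
       \<noteq> ((A 1 - A 0) \<bullet> ((V 0 - A 0) \<times> (W 0 - A 0))) * ((A 2 - A 1) \<bullet> ((V 1 - A 1) \<times> (W 1 - A 1)))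
           * ((A 0 - A 2) \<bullet> ((V 2 - A 2) \<times> (W 2 - A 2)))"
proof -
  define N where "N i = (V i - A i) \<times> (W i - A i)" for i
  define n where "n = (A 1 - A 0) \<times> (A 2 - A 0)"
  define X0 where "X0 = (A 0 - A 2) \<bullet> N 0"
  define X1 where "X1 = (A 1 - A 0) \<bullet> N 1"
  define X2 where "X2 = (A 2 - A 1) \<bullet> N 2"
  define Y0 where "Y0 = (A 1 - A 0) \<bullet> N 0"
  define Y1 where "Y1 = (A 2 - A 1) \<bullet> N 1"
  define Y2 where "Y2 = (A 0 - A 2) \<bullet> N 2"
  have c3: "\<And>i. i < (3::nat) \<Longrightarrow> i = 0 \<or> i = 1 \<or> i = 2" by auto
  have nxpv: "nx 0 = 1" "nx 1 = 2" "nx 2 = 0" "pv 0 = 2" "pv 1 = 0" "pv 2 = 1"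
    by (simp_all add: nx_def pv_def)
  have vwi: "\<And>i. i < 3 \<Longrightarrow> \<not> collinear {0, V i - A i, W i - A i}" using vw by blast
  have Nnz: "\<And>i. i < 3 \<Longrightarrow> N i \<noteq> 0" unfolding N_def using vwi cross_eq_0 by blast
  have npv: "\<And>i. i < 3 \<Longrightarrow> (A i - A (pv i)) \<bullet> N i \<noteq> 0"
    unfolding N_def using notspan vwi a_prev by blast
  have nnx: "\<And>i. i < 3 \<Longrightarrow> (A (nx i) - A i) \<bullet> N i \<noteq> 0"
    unfolding N_def using notspan vwi a_next by blast
  have X0nz: "X0 \<noteq> 0" unfolding X0_def using npv[of 0] nxpv by simp
  have X1nz: "X1 \<noteq> 0" unfolding X1_def using npv[of 1] nxpv by simp
  have X2nz: "X2 \<noteq> 0" unfolding X2_def using npv[of 2] nxpv by simp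
  have Y0nz: "Y0 \<noteq> 0" unfolding Y0_def using nnx[of 0] nxpv by simp
  have Y1nz: "Y1 \<noteq> 0" unfolding Y1_def using nnx[of 1] nxpv by simp
  have Y2nz: "Y2 \<noteq> 0" unfolding Y2_def using nnx[of 2] nxpv by simp
  have nnz: "n \<noteq> 0" unfolding n_def using ncol_cross[OF nondeg] .
  have An1: "A 1 \<bullet> n = A 0 \<bullet> n"
    using dot_cross_self(1)[of "A 1 - A 0" "A 2 - A 0"] unfolding n_def by (simp add: inner_diff_left)
  have An2: "A 2 \<bullet> n = A 0 \<bullet> n"
    using dot_cross_self(2)[of "A 2 - A 0" "A 1 - A 0"] unfolding n_def by (simp add: inner_diff_left)
  have Ain: "\<And>i. i < 3 \<Longrightarrow> (A i - A 0) \<bullet> n = 0"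
    using c3 An1 An2 by (auto simp: inner_diff_left)
  have nNi: "\<And>i. i < 3 \<Longrightarrow> n \<times> N i \<noteq> 0"
  proof -
    fix i :: nat assume "i < 3"
    then consider "i = 0" | "i = 1" | "i = 2" using c3 by blast
    then show "n \<times> N i \<noteq> 0"
    proof cases
      case 1 then show ?thesis using nN_lemma[OF nnz _ Y0nz[unfolded Y0_def]] An1 by (simp add: inner_diff_left)
    next
      case 2 then show ?thesis using nN_lemma[OF nnz _ Y1nz[unfolded Y1_def]] An1 An2 by (simp add: inner_diff_left)
    next
      case 3 then show ?thesis using nN_lemma[OF nnz _ Y2nz[unfolded Y2_def]] An2 by (simp add: inner_diff_left)
    qed
  qed
  have pl0: "affine hull {A 0, A 1, A 2} = {x. (x - A 0) \<bullet> n = 0}"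
    unfolding n_def by (rule plane_char) (use nnz n_def in simp)
  have lchar: "\<And>i. i < 3 \<Longrightarrow> lline A V W i = {x. (x - A 0) \<bullet> n = 0 \<and> (x - A i) \<bullet> N i = 0}"
  proof -
    fix i :: nat assume i: "i < 3"
    have "affine hull {A i, V i, W i} = {x. (x - A i) \<bullet> N i = 0}"
      unfolding N_def by (rule plane_char) (use Nnz[OF i] N_def in simp)
    then show "lline A V W i = {x. (x - A 0) \<bullet> n = 0 \<and> (x - A i) \<bullet> N i = 0}"
      unfolding lline_def pl0 by auto
  qed
  have par: "\<And>i j u. i < 3 \<Longrightarrow> j < 3 \<Longrightarrow> u \<noteq> 0 \<Longrightarrow> u \<bullet> n = 0 \<Longrightarrow> u \<bullet> N i = 0 \<Longrightarrow> u \<bullet> N j = 0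
      \<Longrightarrow> lines_parallel (lline A V W i) (lline A V W j)"
  proof -
    fix i j u assume h: "i < 3" "j < 3" "u \<noteq> 0" "u \<bullet> n = 0" "u \<bullet> N i = 0" "u \<bullet> N j = 0"
    show "lines_parallel (lline A V W i) (lline A V W j)"
      unfolding lchar[OF h(1)] lchar[OF h(2)]
      by (rule par_lines[OF h(3-6) nNi[OF h(1)] nNi[OF h(2)] Ain[OF h(1)] Ain[OF h(2)]])
  qed
  have d10: "(A 1 - A 0) \<bullet> N 0 = Y0" "(A 2 - A 0) \<bullet> N 0 = - X0"
    unfolding X0_def Y0_def by (simp_all add: inner_diff_left)
  have d11: "(A 1 - A 0) \<bullet> N 1 = X1" "(A 2 - A 0) \<bullet> N 1 = X1 + Y1"
    unfolding X1_def Y1_def by (simp_all add: inner_diff_left)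
  have d12: "(A 1 - A 0) \<bullet> N 2 = - X2 - Y2" "(A 2 - A 0) \<bullet> N 2 = - Y2"
    unfolding X2_def Y2_def by (simp_all add: inner_diff_left)
  show ?thesis
  proof
    assume eq0: "((A 0 - A 2) \<bullet> ((V 0 - A 0) \<times> (W 0 - A 0))) * ((A 1 - A 0) \<bullet> ((V 1 - A 1) \<times> (W 1 - A 1)))
           * ((A 2 - A 1) \<bullet> ((V 2 - A 2) \<times> (W 2 - A 2)))
       = ((A 1 - A 0) \<bullet> ((V 0 - A 0) \<times> (W 0 - A 0))) * ((A 2 - A 1) \<bullet> ((V 1 - A 1) \<times> (W 1 - A 1)))
           * ((A 0 - A 2) \<bullet> ((V 2 - A 2) \<times> (W 2 - A 2)))"
    then have eq: "X0 * X1 * X2 = Y0 * Y1 * Y2"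
      unfolding X0_def X1_def X2_def Y0_def Y1_def Y2_def N_def by simp
    define l0 where "l0 = X0 * X2"
    define l1 where "l1 = X0 * Y2"
    define l2 where "l2 = Y0 * Y2"
    define S where "S = l0 + l1 + l2"
    have l2nz: "l2 \<noteq> 0" unfolding l2_def using Y0nz Y2nz by simp
    show False
    proof (cases "S = 0")
      case True
      define D where "D = l1 *\<^sub>R (A 1 - A 0) + l2 *\<^sub>R (A 2 - A 0)"
      have Dn: "D \<bullet> n = 0" unfolding D_def using Ain[of 1] Ain[of 2]
        by (simp add: inner_add_left)
      have DN0: "D \<bullet> N 0 = 0" unfolding D_def
        by (simp only: inner_add_left inner_scaleR_left d10) (simp add: l1_def l2_def algebra_simps)
      have "D \<bullet> N 1 = l1 * X1 + l2 * (X1 + Y1)" unfolding D_def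
        by (simp only: inner_add_left inner_scaleR_left d11, simp?)
      also have "\<dots> = X1 * S - X0 * X1 * X2 + Y0 * Y1 * Y2"
        unfolding S_def l0_def l1_def l2_def by (simp add: algebra_simps)
      also have "\<dots> = 0" using True eq by simp
      finally have DN1: "D \<bullet> N 1 = 0" .
      have "D \<times> (A 1 - A 0) = l2 *\<^sub>R ((A 2 - A 0) \<times> (A 1 - A 0))"
        unfolding D_def by (simp add: cross_add_left cross_mult_left)
      also have "\<dots> = - (l2 *\<^sub>R n)" unfolding n_def
        by (metis cross_skew scaleR_minus_right)
      finally have "D \<noteq> 0" using l2nz nnz by auto
      then have "lines_parallel (lline A V W 0) (lline A V W 1)"
        using par[of 0 1 D] Dn DN0 DN1 by simp
      then show False using nonpar by auto
    next
      case False
      define c1 where "c1 = l1 / S"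
      define c2 where "c2 = l2 / S"
      define P where "P = A 0 + (c1 *\<^sub>R (A 1 - A 0) + c2 *\<^sub>R (A 2 - A 0))"
      have P0: "P - A 0 = c1 *\<^sub>R (A 1 - A 0) + c2 *\<^sub>R (A 2 - A 0)" unfolding P_def by simp
      have P1: "P - A 1 = (c1 - 1) *\<^sub>R (A 1 - A 0) + c2 *\<^sub>R (A 2 - A 0)"
        unfolding P_def by (simp add: algebra_simps)
      have P2: "P - A 2 = c1 *\<^sub>R (A 1 - A 0) + (c2 - 1) *\<^sub>R (A 2 - A 0)"
        unfolding P_def by (simp add: algebra_simps)
      have Pn: "(P - A 0) \<bullet> n = 0" unfolding P0 using Ain[of 1] Ain[of 2]
        by (simp add: inner_add_left)
      have "(P - A 0) \<bullet> N 0 = c1 * Y0 - c2 * X0" unfolding P0 by (simp only: inner_add_left inner_scaleR_left d10, simp?)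
      also have "\<dots> = (l1 * Y0 - l2 * X0) / S" unfolding c1_def c2_def by (simp add: diff_divide_distrib)
      also have "l1 * Y0 - l2 * X0 = 0" unfolding l1_def l2_def by (simp add: algebra_simps)
      finally have PN0: "(P - A 0) \<bullet> N 0 = 0" by simp
      have "(P - A 1) \<bullet> N 1 = (c1 - 1) * X1 + c2 * (X1 + Y1)" unfolding P1 by (simp only: inner_add_left inner_scaleR_left d11, simp?)
      also have "\<dots> = ((l1 - S) * X1 + l2 * (X1 + Y1)) / S" unfolding c1_def c2_def
        using False by (simp add: field_simps)
      also have "(l1 - S) * X1 + l2 * (X1 + Y1) = Y0 * Y1 * Y2 - X0 * X1 * X2"
        unfolding S_def l0_def l1_def l2_def by (simp add: algebra_simps)
      finally have PN1: "(P - A 1) \<bullet> N 1 = 0" using eq by simp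
      have "(P - A 2) \<bullet> N 2 = c1 * (- X2 - Y2) + (c2 - 1) * (- Y2)" unfolding P2 by (simp only: inner_add_left inner_scaleR_left d12, simp?)
      also have "\<dots> = (l1 * (- X2 - Y2) + (l2 - S) * (- Y2)) / S" unfolding c1_def c2_def
        using False by (simp add: field_simps)
      also have "l1 * (- X2 - Y2) + (l2 - S) * (- Y2) = 0"
        unfolding S_def l0_def l1_def l2_def by (simp add: algebra_simps)
      finally have PN2: "(P - A 2) \<bullet> N 2 = 0" by simp
      have Pin: "\<And>i. i < 3 \<Longrightarrow> P \<in> lline A V W i"
        using c3 lchar Pn PN0 PN1 PN2 by auto
      have uniq: "\<And>i j Q. i < 3 \<Longrightarrow> j < 3 \<Longrightarrow> i \<noteq> j \<Longrightarrow> Q \<in> lline A V W i \<Longrightarrow> Q \<in> lline A V W j \<Longrightarrow> Q = P"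
      proof (rule ccontr)
        fix i j Q assume ij: "i < 3" "j < 3" "i \<noteq> j" and Q: "Q \<in> lline A V W i" "Q \<in> lline A V W j" and ne: "Q \<noteq> P"
        have Pi: "(P - A 0) \<bullet> n = 0" "(P - A i) \<bullet> N i = 0" "(P - A j) \<bullet> N j = 0"
          using Pin[OF ij(1)] Pin[OF ij(2)] lchar[OF ij(1)] lchar[OF ij(2)] by auto
        have Qi: "(Q - A 0) \<bullet> n = 0" "(Q - A i) \<bullet> N i = 0" "(Q - A j) \<bullet> N j = 0"
          using Q lchar[OF ij(1)] lchar[OF ij(2)] by auto
        have "(Q - P) \<bullet> n = 0" "(Q - P) \<bullet> N i = 0" "(Q - P) \<bullet> N j = 0"
          using Pi Qi by (simp_all add: inner_diff_left)
        moreover have "Q - P \<noteq> 0" using ne by simp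
        ultimately have "lines_parallel (lline A V W i) (lline A V W j)"
          using par[OF ij(1,2)] by blast
        then show False using nonpar ij by blast
      qed
      have B: "\<And>i. i < 3 \<Longrightarrow> Bpt A V W i = P"
      proof -
        fix i :: nat assume i: "i < 3"
        have nx3: "nx i < 3" "nx i \<noteq> i" unfolding nx_def using i c3[OF i] by auto
        show "Bpt A V W i = P" unfolding Bpt_def
        proof (rule the_equality)
          show "P \<in> lline A V W i \<inter> lline A V W (nx i)" using Pin i nx3 by blast
          show "\<And>Q. Q \<in> lline A V W i \<inter> lline A V W (nx i) \<Longrightarrow> Q = P"
            using uniq[OF i nx3(1)] nx3(2) by (metis IntD1 IntD2)
        qed
      qed
      have "{Bpt A V W 0, Bpt A V W 1, Bpt A V W 2} = {P}" using B by simp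
      then show False using B_noncol by simp
    qed
  qed
qed



lemma triple_swap:
  fixes w v u :: "real^3"
  shows "(w \<times> v) \<bullet> u = w \<bullet> (v \<times> u)" "v \<bullet> (w \<times> u) = - (w \<bullet> (v \<times> u))"
  unfolding cross3_def inner_vec_def sum_3 vector_3 by (simp_all add: vector_3) algebra+

lemma side_inf:
  fixes Ai Aj Vj Wi dv dw \<omega> \<tau> :: "real^3"
  assumes "Aj - Ai \<noteq> 0" "0 = \<omega> \<times> Ai + \<tau>" "0 = \<omega> \<times> Aj + \<tau>" "dv = \<omega> \<times> Vj + \<tau>" "dw = \<omega> \<times> Wi + \<tau>"
  shows "\<exists>t. dw = t *\<^sub>R ((Aj - Ai) \<times> (Wi - Ai)) \<and> dv = t *\<^sub>R ((Aj - Ai) \<times> (Vj - Aj))"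
proof -
  define a where "a = Aj - Ai"
  have h2: "\<omega> \<times> Ai + \<tau> = 0" "\<omega> \<times> Aj + \<tau> = 0" using assms(2,3) by simp_all
  have xi: "\<omega> \<times> Ai = - \<tau>" "\<omega> \<times> Aj = - \<tau>" using h2 by (simp_all add: eq_neg_iff_add_eq_0)
  have wa: "\<omega> \<times> a = 0" unfolding a_def Cross3.right_diff_distrib xi by simp
  have aw: "a \<times> \<omega> = 0" using wa cross_skew[of a \<omega>] by simp
  have e: "(a \<bullet> a) *\<^sub>R \<omega> = (\<omega> \<bullet> a) *\<^sub>R a"
    using cross_cross_l[of a \<omega> a] aw by simp
  have aa: "a \<bullet> a \<noteq> 0" using assms(1) a_def by simp
  define t where "t = (\<omega> \<bullet> a) / (a \<bullet> a)"
  have om: "\<omega> = t *\<^sub>R a"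
  proof -
    have "\<omega> = (1 / (a \<bullet> a)) *\<^sub>R ((a \<bullet> a) *\<^sub>R \<omega>)" using aa by simp
    also have "\<dots> = t *\<^sub>R a" unfolding e t_def by simp
    finally show ?thesis .
  qed
  have "dw = \<omega> \<times> (Wi - Ai)" unfolding assms(5) Cross3.right_diff_distrib xi by simp
  moreover have "dv = \<omega> \<times> (Vj - Aj)"
  proof -
    have "dv = \<omega> \<times> (Vj - Ai)" unfolding assms(4) Cross3.right_diff_distrib xi by simp
    also have "Vj - Ai = (Vj - Aj) + a" unfolding a_def by simp
    finally show ?thesis using wa by (simp add: cross_add_right)
  qed
  ultimately have "dw = t *\<^sub>R (a \<times> (Wi - Ai))" "dv = t *\<^sub>R (a \<times> (Vj - Aj))"
    unfolding om by (simp_all add: cross_mult_left)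
  then show ?thesis unfolding a_def by blast
qed

lemma corner_inf:
  fixes Ai Vi Wi dv dw \<omega> \<tau> :: "real^3"
  assumes "dv = \<omega> \<times> Vi + \<tau>" "0 = \<omega> \<times> Ai + \<tau>" "dw = \<omega> \<times> Wi + \<tau>"
  shows "dv \<bullet> (Wi - Ai) + (Vi - Ai) \<bullet> dw = 0"
proof -
  have h2: "\<omega> \<times> Ai + \<tau> = 0" using assms(2) by simp
  have xi: "\<omega> \<times> Ai = - \<tau>" using h2 by (simp add: eq_neg_iff_add_eq_0)
  have "dv = \<omega> \<times> (Vi - Ai)" "dw = \<omega> \<times> (Wi - Ai)"
    unfolding assms(1,3) Cross3.right_diff_distrib xi by simp_all
  then show ?thesis using triple_swap(1)[of \<omega> "Vi - Ai" "Wi - Ai"] triple_swap(2)[of "Vi - Ai" \<omega> "Wi - Ai"]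
    by simp
qed



lemma side_extract:
  fixes Ai Aj Vj Wi dv dw :: "real^3"
  assumes "inf_rigid [(Ai, 0), (Aj, 0), (Vj, dv), (Wi, dw)]" "Aj - Ai \<noteq> 0"
  shows "\<exists>t. dw = t *\<^sub>R ((Aj - Ai) \<times> (Wi - Ai)) \<and> dv = t *\<^sub>R ((Aj - Ai) \<times> (Vj - Aj))"
proof -
  obtain \<omega> \<tau> where h: "\<forall>(p, u) \<in> set [(Ai, 0), (Aj, 0), (Vj, dv), (Wi, dw)]. u = \<omega> \<times> p + \<tau>"
    using assms(1) unfolding inf_rigid_def by blast
  then have "0 = \<omega> \<times> Ai + \<tau>" "0 = \<omega> \<times> Aj + \<tau>" "dv = \<omega> \<times> Vj + \<tau>" "dw = \<omega> \<times> Wi + \<tau>"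
    by auto
  then show ?thesis using side_inf[OF assms(2)] by blast
qed

lemma corner_extract:
  fixes Ai Vi Wi dv dw :: "real^3"
  assumes "inf_rigid [(Vi, dv), (Ai, 0), (Wi, dw)]"
  shows "dv \<bullet> (Wi - Ai) + (Vi - Ai) \<bullet> dw = 0"
proof -
  obtain \<omega> \<tau> where h: "\<forall>(p, u) \<in> set [(Vi, dv), (Ai, 0), (Wi, dw)]. u = \<omega> \<times> p + \<tau>"
    using assms(1) unfolding inf_rigid_def by blast
  then have "dv = \<omega> \<times> Vi + \<tau>" "0 = \<omega> \<times> Ai + \<tau>" "dw = \<omega> \<times> Wi + \<tau>"
    by auto
  then show ?thesis by (rule corner_inf)
qed

lemma vertex_rel:
  fixes a a' v w :: "real^3"
  shows "(t' *\<^sub>R (a' \<times> v)) \<bullet> w + v \<bullet> (t *\<^sub>R (a \<times> w)) = t' * (a' \<bullet> (v \<times> w)) - t * (a \<bullet> (v \<times> w))"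
  using triple_swap(1)[of a' v w] triple_swap(2)[of v a w] by simp

lemma inf_part:
  fixes A V W :: "nat \<Rightarrow> real^3"
  assumes vw: "\<forall>i<3. \<not> collinear {0, V i - A i, W i - A i}"
    and a_next: "\<forall>i<3. A (nx i) - A i \<notin> span {V i - A i, W i - A i}"
    and geq: "((A 0 - A 2) \<bullet> ((V 0 - A 0) \<times> (W 0 - A 0))) * ((A 1 - A 0) \<bullet> ((V 1 - A 1) \<times> (W 1 - A 1)))
           * ((A 2 - A 1) \<bullet> ((V 2 - A 2) \<times> (W 2 - A 2)))
       \<noteq> ((A 1 - A 0) \<bullet> ((V 0 - A 0) \<times> (W 0 - A 0))) * ((A 2 - A 1) \<bullet> ((V 1 - A 1) \<times> (W 1 - A 1)))
           * ((A 0 - A 2) \<bullet> ((V 2 - A 2) \<times> (W 2 - A 2)))"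
  shows "\<not> inf_flexible A V W"
proof
  assume "inf_flexible A V W"
  then obtain dV dW where def: "inf_isometric_deformation A V W dV dW"
    and nz: "\<exists>i<3. dV i \<noteq> 0 \<or> dW i \<noteq> 0"
    unfolding inf_flexible_def by blast
  have nxpv: "nx 0 = 1" "nx 1 = 2" "nx 2 = 0"
    by (simp_all add: nx_def)
  define X0 where "X0 = (A 0 - A 2) \<bullet> ((V 0 - A 0) \<times> (W 0 - A 0))"
  define X1 where "X1 = (A 1 - A 0) \<bullet> ((V 1 - A 1) \<times> (W 1 - A 1))"
  define X2 where "X2 = (A 2 - A 1) \<bullet> ((V 2 - A 2) \<times> (W 2 - A 2))"
  define Y0 where "Y0 = (A 1 - A 0) \<bullet> ((V 0 - A 0) \<times> (W 0 - A 0))"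
  define Y1 where "Y1 = (A 2 - A 1) \<bullet> ((V 1 - A 1) \<times> (W 1 - A 1))"
  define Y2 where "Y2 = (A 0 - A 2) \<bullet> ((V 2 - A 2) \<times> (W 2 - A 2))"
  have nnx: "\<And>i. i < 3 \<Longrightarrow> (A (nx i) - A i) \<bullet> ((V i - A i) \<times> (W i - A i)) \<noteq> 0"
    using notspan vw a_next by blast
  have Y0nz: "Y0 \<noteq> 0" unfolding Y0_def using nnx[of 0] nxpv by simp
  have Y1nz: "Y1 \<noteq> 0" unfolding Y1_def using nnx[of 1] nxpv by simp
  have Y2nz: "Y2 \<noteq> 0" unfolding Y2_def using nnx[of 2] nxpv by simp
  have anz: "\<And>i. i < 3 \<Longrightarrow> A (nx i) - A i \<noteq> 0"
    using a_next span_zero by metis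
  have d: "\<And>i. i < 3 \<Longrightarrow> inf_rigid [(A i, 0), (A (nx i), 0), (V (nx i), dV (nx i)), (W i, dW i)]
          \<and> inf_rigid [(V i, dV i), (A i, 0), (W i, dW i)]"
    using def unfolding inf_isometric_deformation_def by blast
  obtain t0 where t0: "dW 0 = t0 *\<^sub>R ((A 1 - A 0) \<times> (W 0 - A 0))" "dV 1 = t0 *\<^sub>R ((A 1 - A 0) \<times> (V 1 - A 1))"
    using side_extract[OF conjunct1[OF d[of 0]] anz[of 0]] nxpv by auto
  obtain t1 where t1: "dW 1 = t1 *\<^sub>R ((A 2 - A 1) \<times> (W 1 - A 1))" "dV 2 = t1 *\<^sub>R ((A 2 - A 1) \<times> (V 2 - A 2))"
    using side_extract[OF conjunct1[OF d[of 1]] anz[of 1]] nxpv by auto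
  obtain t2 where t2: "dW 2 = t2 *\<^sub>R ((A 0 - A 2) \<times> (W 2 - A 2))" "dV 0 = t2 *\<^sub>R ((A 0 - A 2) \<times> (V 0 - A 0))"
    using side_extract[OF conjunct1[OF d[of 2]] anz[of 2]] nxpv by auto
  have e0: "t2 * X0 - t0 * Y0 = 0"
    using corner_extract[OF conjunct2[OF d[of 0]]] unfolding t0 t2 vertex_rel X0_def Y0_def by simp
  have e1: "t0 * X1 - t1 * Y1 = 0"
    using corner_extract[OF conjunct2[OF d[of 1]]] unfolding t0 t1 vertex_rel X1_def Y1_def by simp
  have e2: "t1 * X2 - t2 * Y2 = 0"
    using corner_extract[OF conjunct2[OF d[of 2]]] unfolding t1 t2 vertex_rel X2_def Y2_def by simp
  have "(t2 * X0) * (t0 * X1) * (t1 * X2) = (t0 * Y0) * (t1 * Y1) * (t2 * Y2)"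
    using e0 e1 e2 by simp
  then have "t0 * t1 * t2 * (X0 * X1 * X2 - Y0 * Y1 * Y2) = 0" by (simp add: algebra_simps)
  moreover have "X0 * X1 * X2 - Y0 * Y1 * Y2 \<noteq> 0" using geq unfolding X0_def X1_def X2_def Y0_def Y1_def Y2_def by simp
  ultimately have "t0 = 0 \<or> t1 = 0 \<or> t2 = 0" by simp
  then have tz: "t0 = 0 \<and> t1 = 0 \<and> t2 = 0"
    using e0 e1 e2 Y0nz Y1nz Y2nz by auto
  have "\<forall>i<3. dV i = 0 \<and> dW i = 0"
  proof (intro allI impI)
    fix i :: nat assume "i < 3"
    then have "i = 0 \<or> i = 1 \<or> i = 2" by auto
    then show "dV i = 0 \<and> dW i = 0" using t0 t1 t2 tz by auto
  qed
  then show False using nz by blast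
qed



lemma det2span:
  fixes e f :: "real^3"
  shows "(a1 *\<^sub>R e + b1 *\<^sub>R f) \<bullet> ((a2 *\<^sub>R e + b2 *\<^sub>R f) \<times> (a3 *\<^sub>R e + b3 *\<^sub>R f)) = 0"
  unfolding cross3_def inner_vec_def sum_3 by (simp add: vector_3) algebra

lemma triple_cyc:
  fixes x y z :: "real^3"
  shows "x \<bullet> (y \<times> z) = z \<bullet> (x \<times> y)"
  unfolding cross3_def inner_vec_def sum_3 by (simp add: vector_3) algebra

lemma coplanar_comb:
  fixes p q r s :: "real^3"
  assumes "coplanar {p, q, r, s}" "(q - p) \<times> (r - p) \<noteq> 0"
  shows "\<exists>\<alpha> \<beta>. s - p = \<alpha> *\<^sub>R (q - p) + \<beta> *\<^sub>R (r - p)"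
proof -
  obtain u v w where sub: "{p, q, r, s} \<subseteq> affine hull {u, v, w}"
    using assms(1) unfolding coplanar_def by blast
  have rep: "\<And>x. x \<in> affine hull {u, v, w} \<Longrightarrow> \<exists>c d. x - u = c *\<^sub>R (v - u) + d *\<^sub>R (w - u)"
  proof -
    fix x assume "x \<in> affine hull {u, v, w}"
    then obtain a b c where x: "x = a *\<^sub>R u + b *\<^sub>R v + c *\<^sub>R w" "a + b + c = 1"
      unfolding affine_hull_3 by blast
    have a: "a = 1 - b - c" using x(2) by simp
    have "x - u = b *\<^sub>R (v - u) + c *\<^sub>R (w - u)" unfolding x(1) a by (simp add: algebra_simps)
    then show "\<exists>c d. x - u = c *\<^sub>R (v - u) + d *\<^sub>R (w - u)" by blast
  qed
  obtain cp dp where p: "p - u = cp *\<^sub>R (v - u) + dp *\<^sub>R (w - u)" using rep sub by blast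
  obtain cq dq where q: "q - u = cq *\<^sub>R (v - u) + dq *\<^sub>R (w - u)" using rep sub by blast
  obtain cr dr where r: "r - u = cr *\<^sub>R (v - u) + dr *\<^sub>R (w - u)" using rep sub by blast
  obtain cs ds where s: "s - u = cs *\<^sub>R (v - u) + ds *\<^sub>R (w - u)" using rep sub by blast
  have qp: "q - p = (cq - cp) *\<^sub>R (v - u) + (dq - dp) *\<^sub>R (w - u)"
  proof -
    have "q - p = (q - u) - (p - u)" by simp
    also have "\<dots> = (cq - cp) *\<^sub>R (v - u) + (dq - dp) *\<^sub>R (w - u)" unfolding p q by (simp add: algebra_simps)
    finally show ?thesis .
  qed
  have rp: "r - p = (cr - cp) *\<^sub>R (v - u) + (dr - dp) *\<^sub>R (w - u)"
  proof -
    have "r - p = (r - u) - (p - u)" by simp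
    also have "\<dots> = (cr - cp) *\<^sub>R (v - u) + (dr - dp) *\<^sub>R (w - u)" unfolding p r by (simp add: algebra_simps)
    finally show ?thesis .
  qed
  have sp: "s - p = (cs - cp) *\<^sub>R (v - u) + (ds - dp) *\<^sub>R (w - u)"
  proof -
    have "s - p = (s - u) - (p - u)" by simp
    also have "\<dots> = (cs - cp) *\<^sub>R (v - u) + (ds - dp) *\<^sub>R (w - u)" unfolding p s by (simp add: algebra_simps)
    finally show ?thesis .
  qed
  have "(s - p) \<bullet> ((q - p) \<times> (r - p)) = 0" unfolding qp rp sp by (rule det2span)
  then show ?thesis using inplane[OF assms(2)] by blast
qed



lemma side_fin:
  fixes Ai Aj Vj Wi V' W' :: "real^3"
  assumes fc: "face_congruent [(Ai, Ai), (Aj, Aj), (Vj, V'), (Wi, W')]"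
    and co: "Vj - Ai = \<alpha> *\<^sub>R (Aj - Ai) + \<beta> *\<^sub>R (Wi - Ai)"
  shows "(Aj - Ai) \<bullet> (W' - Wi) = 0" "2 * ((Wi - Ai) \<bullet> (W' - Wi)) + (W' - Wi) \<bullet> (W' - Wi) = 0"
    "V' - Vj = \<beta> *\<^sub>R (W' - Wi)"
proof -
  obtain f :: "real^3 \<Rightarrow> real^3" where iso: "\<forall>x y. dist (f x) (f y) = dist x y"
    and fp: "\<forall>(p, q) \<in> set [(Ai, Ai), (Aj, Aj), (Vj, V'), (Wi, W')]. f p = q"
    using fc unfolding face_congruent_def by blast
  have fA: "f Ai = Ai" "f Aj = Aj" "f Vj = V'" "f Wi = W'" using fp by auto
  define g where "g x = f (x + Ai) - Ai" for x
  have g0: "g 0 = 0" unfolding g_def using fA by simp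
  have giso: "\<forall>x y. dist (g x) (g y) = dist x y"
    unfolding g_def using iso by (simp add: dist_norm algebra_simps)
  have lin: "linear g" by (rule isometry_linear[OF g0 giso])
  have ga: "g (Aj - Ai) = Aj - Ai" unfolding g_def using fA by simp
  have gw: "g (Wi - Ai) = W' - Ai" unfolding g_def using fA by simp
  have gv: "g (Vj - Ai) = V' - Ai" unfolding g_def using fA by simp
  have "g (Vj - Ai) = \<alpha> *\<^sub>R g (Aj - Ai) + \<beta> *\<^sub>R g (Wi - Ai)"
    unfolding co using lin by (simp add: linear_add linear_scale)
  then have "V' - Ai = \<alpha> *\<^sub>R (Aj - Ai) + \<beta> *\<^sub>R (W' - Ai)" unfolding ga gw gv .
  then show "V' - Vj = \<beta> *\<^sub>R (W' - Wi)"
  proof -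
    assume h: "V' - Ai = \<alpha> *\<^sub>R (Aj - Ai) + \<beta> *\<^sub>R (W' - Ai)"
    have "V' - Vj = (V' - Ai) - (Vj - Ai)" by simp
    also have "\<dots> = \<beta> *\<^sub>R (W' - Wi)" unfolding h co by (simp add: algebra_simps)
    finally show ?thesis .
  qed
  define w where "w = Wi - Ai"
  define z where "z = W' - Wi"
  define a where "a = Aj - Ai"
  have n1: "norm (w + z) = norm w"
    using iso[rule_format, of Wi Ai] fA unfolding w_def z_def by (simp add: dist_norm)
  have n2: "norm (w + z - a) = norm (w - a)"
    using iso[rule_format, of Wi Aj] fA unfolding w_def z_def a_def by (simp add: dist_norm)
  have i1: "(w + z) \<bullet> (w + z) = w \<bullet> w" using n1 by (metis norm_eq)
  have i2: "(w + z - a) \<bullet> (w + z - a) = (w - a) \<bullet> (w - a)" using n2 by (metis norm_eq)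
  have e1: "2 * (w \<bullet> z) + z \<bullet> z = 0"
    using i1 by (simp add: inner_add_left inner_add_right inner_commute)
  have e2: "2 * ((w - a) \<bullet> z) + z \<bullet> z = 0"
  proof -
    have "w + z - a = (w - a) + z" by simp
    then have "((w - a) + z) \<bullet> ((w - a) + z) = (w - a) \<bullet> (w - a)" using i2 by metis
    then show ?thesis by (simp only: inner_add_left inner_add_right inner_commute[of z "w - a"], simp?)
  qed
  have "a \<bullet> z = 0" using e1 e2 by (simp add: inner_diff_left)
  then show "(Aj - Ai) \<bullet> (W' - Wi) = 0" unfolding a_def z_def .
  show "2 * ((Wi - Ai) \<bullet> (W' - Wi)) + (W' - Wi) \<bullet> (W' - Wi) = 0" using e1 unfolding w_def z_def .
qed

lemma corner_fin:
  fixes Ai Vi Wi V' W' :: "real^3"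
  assumes fc: "face_congruent [(Vi, V'), (Ai, Ai), (Wi, W')]"
  shows "(V' - Ai) \<bullet> (W' - Ai) = (Vi - Ai) \<bullet> (Wi - Ai)"
proof -
  obtain f :: "real^3 \<Rightarrow> real^3" where iso: "\<forall>x y. dist (f x) (f y) = dist x y"
    and fp: "\<forall>(p, q) \<in> set [(Vi, V'), (Ai, Ai), (Wi, W')]. f p = q"
    using fc unfolding face_congruent_def by blast
  have fA: "f Ai = Ai" "f Vi = V'" "f Wi = W'" using fp by auto
  define x where "x = V' - Ai"
  define y where "y = W' - Ai"
  define x0 where "x0 = Vi - Ai"
  define y0 where "y0 = Wi - Ai"
  have "norm x = norm x0" using iso[rule_format, of Vi Ai] fA unfolding x_def x0_def by (simp add: dist_norm)
  then have a: "x \<bullet> x = x0 \<bullet> x0" by (metis norm_eq)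
  have "norm y = norm y0" using iso[rule_format, of Wi Ai] fA unfolding y_def y0_def by (simp add: dist_norm)
  then have b: "y \<bullet> y = y0 \<bullet> y0" by (metis norm_eq)
  have "norm (x - y) = norm (x0 - y0)" using iso[rule_format, of Vi Wi] fA unfolding x_def y_def x0_def y0_def
    by (simp add: dist_norm)
  then have c: "(x - y) \<bullet> (x - y) = (x0 - y0) \<bullet> (x0 - y0)" by (metis norm_eq)
  have "x \<bullet> y = x0 \<bullet> y0" using a b c by (simp add: inner_diff_left inner_diff_right inner_commute)
  then show ?thesis unfolding x_def y_def x0_def y0_def .
qed



lemma vertex_fin:
  fixes a a' v w w' z z' :: "real^3" and b :: real
  assumes az: "a \<bullet> z = 0" and wz: "2 * (w \<bullet> z) + z \<bullet> z = 0"
    and az': "a' \<bullet> z' = 0" and wz': "2 * (w' \<bullet> z') + z' \<bullet> z' = 0"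
    and vert: "(v + b *\<^sub>R z') \<bullet> (w + z) = v \<bullet> w"
    and beta: "b *\<^sub>R (a' \<times> w') = a' \<times> v"
    and m: "a \<times> w \<noteq> 0" "a' \<times> w' \<noteq> 0"
  shows "\<bar>(z' \<bullet> (a' \<times> w')) / ((a' \<times> w') \<bullet> (a' \<times> w')) * (a' \<bullet> (v \<times> w))
           - (z \<bullet> (a \<times> w)) / ((a \<times> w) \<bullet> (a \<times> w)) * (a \<bullet> (v \<times> w))\<bar>
      \<le> (\<bar>b\<bar> + \<bar>b\<bar> * \<bar>((a' \<bullet> a') * (w \<bullet> w') - (a' \<bullet> w') * (w \<bullet> a')) / ((a' \<times> w') \<bullet> (a' \<times> w'))\<bar>
          + \<bar>((a \<bullet> a) * (v \<bullet> w) - (a \<bullet> w) * (v \<bullet> a)) / ((a \<times> w) \<bullet> (a \<times> w))\<bar>) * (norm z + norm z')\<^sup>2"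
proof -
  define m1 where "m1 = a \<times> w"
  define m2 where "m2 = a' \<times> w'"
  define C where "C = ((a \<bullet> a) * (v \<bullet> w) - (a \<bullet> w) * (v \<bullet> a)) / (m1 \<bullet> m1)"
  define C' where "C' = ((a' \<bullet> a') * (w \<bullet> w') - (a' \<bullet> w') * (w \<bullet> a')) / (m2 \<bullet> m2)"
  define X where "X = a' \<bullet> (v \<times> w)"
  define Y where "Y = a \<bullet> (v \<times> w)"
  define \<zeta> where "\<zeta> = (z \<bullet> m1) / (m1 \<bullet> m1)"
  define \<zeta>' where "\<zeta>' = (z' \<bullet> m2) / (m2 \<bullet> m2)"
  define s where "s = norm z + norm z'"
  have mm1: "m1 \<bullet> m1 \<noteq> 0" using m(1) m1_def by simp
  have mm2: "m2 \<bullet> m2 \<noteq> 0" using m(2) m2_def by simp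
  have D1: "(m1 \<bullet> m1) *\<^sub>R z = (z \<bullet> m1) *\<^sub>R m1 + ((a \<bullet> z) * (w \<bullet> w) - (w \<bullet> z) * (a \<bullet> w)) *\<^sub>R a
      + ((w \<bullet> z) * (a \<bullet> a) - (a \<bullet> z) * (a \<bullet> w)) *\<^sub>R w"
    unfolding m1_def by (rule decomp3)
  have "v \<bullet> ((m1 \<bullet> m1) *\<^sub>R z) = (z \<bullet> m1) * (v \<bullet> m1) + (w \<bullet> z) * ((a \<bullet> a) * (v \<bullet> w) - (a \<bullet> w) * (v \<bullet> a))"
    unfolding D1 using az by (simp add: inner_add_right algebra_simps inner_commute)
  then have h1: "(m1 \<bullet> m1) * (v \<bullet> z) = (z \<bullet> m1) * (v \<bullet> m1) + (w \<bullet> z) * ((a \<bullet> a) * (v \<bullet> w) - (a \<bullet> w) * (v \<bullet> a))"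
    by simp
  have D2: "(m2 \<bullet> m2) *\<^sub>R z' = (z' \<bullet> m2) *\<^sub>R m2 + ((a' \<bullet> z') * (w' \<bullet> w') - (w' \<bullet> z') * (a' \<bullet> w')) *\<^sub>R a'
      + ((w' \<bullet> z') * (a' \<bullet> a') - (a' \<bullet> z') * (a' \<bullet> w')) *\<^sub>R w'"
    unfolding m2_def by (rule decomp3)
  have "w \<bullet> ((m2 \<bullet> m2) *\<^sub>R z') = (z' \<bullet> m2) * (w \<bullet> m2) + (w' \<bullet> z') * ((a' \<bullet> a') * (w \<bullet> w') - (a' \<bullet> w') * (w \<bullet> a'))"
    unfolding D2 using az' by (simp add: inner_add_right algebra_simps inner_commute)
  then have h2: "(m2 \<bullet> m2) * (w \<bullet> z') = (z' \<bullet> m2) * (w \<bullet> m2) + (w' \<bullet> z') * ((a' \<bullet> a') * (w \<bullet> w') - (a' \<bullet> w') * (w \<bullet> a'))"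
    by simp
  have h3: "v \<bullet> m1 = - Y" unfolding m1_def Y_def by (rule triple_swap(2))
  have h4: "b * (w \<bullet> m2) = X"
  proof -
    have "b * (w \<bullet> m2) = w \<bullet> (b *\<^sub>R m2)" by simp
    also have "\<dots> = w \<bullet> (a' \<times> v)" unfolding m2_def beta ..
    also have "\<dots> = X" unfolding X_def by (rule triple_cyc[symmetric])
    finally show ?thesis .
  qed
  have h5: "v \<bullet> z + b * (w \<bullet> z') + b * (z' \<bullet> z) = 0"
    using vert by (simp add: inner_add_left inner_add_right inner_commute algebra_simps)
  have vz: "v \<bullet> z = - \<zeta> * Y + (w \<bullet> z) * C"
  proof -
    have "v \<bullet> z = ((m1 \<bullet> m1) * (v \<bullet> z)) / (m1 \<bullet> m1)" using mm1 by simp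
    also have "\<dots> = ((z \<bullet> m1) * (- Y) + (w \<bullet> z) * ((a \<bullet> a) * (v \<bullet> w) - (a \<bullet> w) * (v \<bullet> a))) / (m1 \<bullet> m1)"
      unfolding h1 h3 ..
    also have "\<dots> = - \<zeta> * Y + (w \<bullet> z) * C" unfolding \<zeta>_def C_def using mm1 by (simp add: field_simps)
    finally show ?thesis .
  qed
  have wz2: "b * (w \<bullet> z') = \<zeta>' * X + b * (w' \<bullet> z') * C'"
  proof -
    have "(w \<bullet> z') = ((m2 \<bullet> m2) * (w \<bullet> z')) / (m2 \<bullet> m2)" using mm2 by simp
    also have "\<dots> = ((z' \<bullet> m2) * (w \<bullet> m2) + (w' \<bullet> z') * ((a' \<bullet> a') * (w \<bullet> w') - (a' \<bullet> w') * (w \<bullet> a'))) / (m2 \<bullet> m2)"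
      unfolding h2 ..
    also have "\<dots> = \<zeta>' * (w \<bullet> m2) + (w' \<bullet> z') * C'" unfolding \<zeta>'_def C'_def using mm2 by (simp add: field_simps)
    finally have "(w \<bullet> z') = \<zeta>' * (w \<bullet> m2) + (w' \<bullet> z') * C'" .
    then have "b * (w \<bullet> z') = \<zeta>' * (b * (w \<bullet> m2)) + b * (w' \<bullet> z') * C'" by (simp add: algebra_simps)
    then show ?thesis unfolding h4 .
  qed
  have E: "\<zeta>' * X - \<zeta> * Y = - (b * (z' \<bullet> z)) + b * C' * (z' \<bullet> z') / 2 + C * (z \<bullet> z) / 2"
  proof -
    have "w \<bullet> z = - (z \<bullet> z) / 2" "w' \<bullet> z' = - (z' \<bullet> z') / 2" using wz wz' by simp_all
    then show ?thesis using h5 vz wz2 by (simp add: algebra_simps)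
  qed
  have s0: "0 \<le> norm z" "0 \<le> norm z'" by simp_all
  have zz: "z \<bullet> z \<le> s\<^sup>2" unfolding s_def power2_norm_eq_inner[symmetric]
    using s0 by (simp add: power_mono)
  have zz': "z' \<bullet> z' \<le> s\<^sup>2" unfolding s_def power2_norm_eq_inner[symmetric]
    using s0 by (simp add: power_mono)
  have zz0: "0 \<le> z \<bullet> z" "0 \<le> z' \<bullet> z'" by simp_all
  have zzc: "\<bar>z' \<bullet> z\<bar> \<le> s\<^sup>2"
  proof -
    have "\<bar>z' \<bullet> z\<bar> \<le> norm z' * norm z" by (rule Cauchy_Schwarz_ineq2)
    also have "\<dots> \<le> s\<^sup>2" unfolding s_def power2_eq_square using s0
      by (simp add: algebra_simps mult_nonneg_nonneg)
    finally show ?thesis .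
  qed
  have t1: "\<bar>b * (z' \<bullet> z)\<bar> \<le> \<bar>b\<bar> * s\<^sup>2" unfolding abs_mult by (rule mult_left_mono[OF zzc]) simp
  have t2: "\<bar>b * C' * (z' \<bullet> z') / 2\<bar> \<le> \<bar>b\<bar> * \<bar>C'\<bar> * s\<^sup>2"
  proof -
    have "\<bar>b * C' * (z' \<bullet> z') / 2\<bar> = \<bar>b\<bar> * \<bar>C'\<bar> * (z' \<bullet> z') / 2" using zz0 by (simp add: abs_mult)
    also have "\<dots> \<le> \<bar>b\<bar> * \<bar>C'\<bar> * s\<^sup>2"
    proof -
      have "0 \<le> \<bar>b\<bar> * \<bar>C'\<bar> * s\<^sup>2" by simp
      moreover have "\<bar>b\<bar> * \<bar>C'\<bar> * (z' \<bullet> z') \<le> \<bar>b\<bar> * \<bar>C'\<bar> * s\<^sup>2"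
        using mult_left_mono[OF zz', of "\<bar>b\<bar> * \<bar>C'\<bar>"] by simp
      ultimately show ?thesis by linarith
    qed
    finally show ?thesis .
  qed
  have t3: "\<bar>C * (z \<bullet> z) / 2\<bar> \<le> \<bar>C\<bar> * s\<^sup>2"
  proof -
    have "\<bar>C * (z \<bullet> z) / 2\<bar> = \<bar>C\<bar> * (z \<bullet> z) / 2" using zz0 by (simp add: abs_mult)
    also have "\<dots> \<le> \<bar>C\<bar> * s\<^sup>2"
    proof -
      have "0 \<le> \<bar>C\<bar> * s\<^sup>2" by simp
      moreover have "\<bar>C\<bar> * (z \<bullet> z) \<le> \<bar>C\<bar> * s\<^sup>2"
        using mult_left_mono[OF zz, of "\<bar>C\<bar>"] by simp
      ultimately show ?thesis by linarith
    qed
    finally show ?thesis .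
  qed
  have "\<bar>\<zeta>' * X - \<zeta> * Y\<bar> \<le> \<bar>b\<bar> * s\<^sup>2 + \<bar>b\<bar> * \<bar>C'\<bar> * s\<^sup>2 + \<bar>C\<bar> * s\<^sup>2"
    unfolding E using t1 t2 t3 by linarith
  then show ?thesis unfolding \<zeta>_def \<zeta>'_def X_def Y_def m1_def m2_def C_def C'_def s_def
    by (simp add: algebra_simps)
qed



lemma cycle_id:
  fixes z0 z1 z2 X0 X1 X2 Y0 Y1 Y2 :: real
  shows "z0 * (X0 * X1 * X2 - Y0 * Y1 * Y2) = Y1 * Y2 * (z2 * X0 - z0 * Y0) + X0 * Y1 * (z1 * X2 - z2 * Y2) + X0 * X2 * (z0 * X1 - z1 * Y1)"
  by (simp add: algebra_simps)

lemma comb3: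
  fixes p q r e0 e1 e2 k0 k1 k2 t :: real
  assumes "\<bar>e0\<bar> \<le> k0 * t" "\<bar>e1\<bar> \<le> k1 * t" "\<bar>e2\<bar> \<le> k2 * t"
  shows "\<bar>p * e0 + q * e1 + r * e2\<bar> \<le> (\<bar>p\<bar> * k0 + \<bar>q\<bar> * k1 + \<bar>r\<bar> * k2) * t"
proof -
  have a: "\<bar>p * e0\<bar> \<le> \<bar>p\<bar> * (k0 * t)" unfolding abs_mult by (rule mult_left_mono[OF assms(1)]) simp
  have b: "\<bar>q * e1\<bar> \<le> \<bar>q\<bar> * (k1 * t)" unfolding abs_mult by (rule mult_left_mono[OF assms(2)]) simp
  have c: "\<bar>r * e2\<bar> \<le> \<bar>r\<bar> * (k2 * t)" unfolding abs_mult by (rule mult_left_mono[OF assms(3)]) simp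
  have "\<bar>p * e0 + q * e1 + r * e2\<bar> \<le> \<bar>p * e0\<bar> + \<bar>q * e1\<bar> + \<bar>r * e2\<bar>" by linarith
  also have "\<dots> \<le> \<bar>p\<bar> * (k0 * t) + \<bar>q\<bar> * (k1 * t) + \<bar>r\<bar> * (k2 * t)" using a b c by linarith
  finally show ?thesis by (simp add: algebra_simps)
qed

lemma div_bound:
  fixes x D M :: real
  assumes "\<bar>x * D\<bar> \<le> M" "D \<noteq> 0"
  shows "\<bar>x\<bar> \<le> M / \<bar>D\<bar>"
  using assms by (simp add: abs_mult field_simps)

lemma z_bound:
  fixes a w z :: "real^3"
  assumes az: "a \<bullet> z = 0" and wz: "2 * (w \<bullet> z) + z \<bullet> z = 0" and m: "a \<times> w \<noteq> 0"
  shows "norm z \<le> \<bar>(z \<bullet> (a \<times> w)) / ((a \<times> w) \<bullet> (a \<times> w))\<bar> * norm (a \<times> w)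
     + (norm z)\<^sup>2 * (norm ((a \<bullet> a) *\<^sub>R w - (a \<bullet> w) *\<^sub>R a) / (2 * ((a \<times> w) \<bullet> (a \<times> w))))"
proof -
  define m1 where "m1 = a \<times> w"
  define R where "R = (a \<bullet> a) *\<^sub>R w - (a \<bullet> w) *\<^sub>R a"
  have mm: "m1 \<bullet> m1 > 0" using m m1_def by simp
  have D1: "(m1 \<bullet> m1) *\<^sub>R z = (z \<bullet> m1) *\<^sub>R m1 + ((a \<bullet> z) * (w \<bullet> w) - (w \<bullet> z) * (a \<bullet> w)) *\<^sub>R a
      + ((w \<bullet> z) * (a \<bullet> a) - (a \<bullet> z) * (a \<bullet> w)) *\<^sub>R w"
    unfolding m1_def by (rule decomp3)
  then have "(m1 \<bullet> m1) *\<^sub>R z = (z \<bullet> m1) *\<^sub>R m1 + (w \<bullet> z) *\<^sub>R R"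
    unfolding R_def using az by (simp add: algebra_simps)
  then have "z = ((z \<bullet> m1) / (m1 \<bullet> m1)) *\<^sub>R m1 + ((w \<bullet> z) / (m1 \<bullet> m1)) *\<^sub>R R"
  proof -
    assume h: "(m1 \<bullet> m1) *\<^sub>R z = (z \<bullet> m1) *\<^sub>R m1 + (w \<bullet> z) *\<^sub>R R"
    have "z = (1 / (m1 \<bullet> m1)) *\<^sub>R ((m1 \<bullet> m1) *\<^sub>R z)" using mm by simp
    also have "\<dots> = ((z \<bullet> m1) / (m1 \<bullet> m1)) *\<^sub>R m1 + ((w \<bullet> z) / (m1 \<bullet> m1)) *\<^sub>R R"
      unfolding h by (simp add: scaleR_add_right)
    finally show ?thesis .
  qed
  then have "norm z \<le> norm (((z \<bullet> m1) / (m1 \<bullet> m1)) *\<^sub>R m1) + norm (((w \<bullet> z) / (m1 \<bullet> m1)) *\<^sub>R R)"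
    by (metis norm_triangle_ineq)
  also have "\<dots> = \<bar>(z \<bullet> m1) / (m1 \<bullet> m1)\<bar> * norm m1 + \<bar>w \<bullet> z\<bar> / (m1 \<bullet> m1) * norm R"
    using mm by simp
  also have "\<bar>w \<bullet> z\<bar> = (norm z)\<^sup>2 / 2"
  proof -
    have "w \<bullet> z = - (z \<bullet> z) / 2" using wz by simp
    then show ?thesis by (simp add: power2_norm_eq_inner)
  qed
  finally show ?thesis unfolding m1_def R_def by (simp add: field_simps)
qed



lemma sq_le: "0 \<le> (x::real) \<Longrightarrow> x \<le> s \<Longrightarrow> x\<^sup>2 \<le> s\<^sup>2"
  by (simp add: power_mono)

lemma key_bound:
  fixes a v w :: "nat \<Rightarrow> real^3" and beta :: "nat \<Rightarrow> real"
  assumes m: "\<forall>i<3. a i \<times> w i \<noteq> 0"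
    and bet: "\<forall>i<3. beta (pv i) *\<^sub>R (a (pv i) \<times> w (pv i)) = a (pv i) \<times> v i"
    and Dl: "(a 2 \<bullet> (v 0 \<times> w 0)) * (a 0 \<bullet> (v 1 \<times> w 1)) * (a 1 \<bullet> (v 2 \<times> w 2))
        \<noteq> (a 0 \<bullet> (v 0 \<times> w 0)) * (a 1 \<bullet> (v 1 \<times> w 1)) * (a 2 \<bullet> (v 2 \<times> w 2))"
  shows "\<exists>L. \<forall>z :: nat \<Rightarrow> real^3. (\<forall>i<3. a i \<bullet> z i = 0 \<and> 2 * (w i \<bullet> z i) + z i \<bullet> z i = 0
            \<and> (v i + beta (pv i) *\<^sub>R z (pv i)) \<bullet> (w i + z i) = v i \<bullet> w i)
        \<longrightarrow> norm (z 0) + norm (z 1) + norm (z 2) \<le> L * (norm (z 0) + norm (z 1) + norm (z 2))\<^sup>2"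
proof -
  have pv: "pv 0 = 2" "pv 1 = 0" "pv 2 = 1" by (simp_all add: pv_def)
  define X where "X i = a (pv i) \<bullet> (v i \<times> w i)" for i
  define Y where "Y i = a i \<bullet> (v i \<times> w i)" for i
  define C where "C i = ((a i \<bullet> a i) * (v i \<bullet> w i) - (a i \<bullet> w i) * (v i \<bullet> a i)) / ((a i \<times> w i) \<bullet> (a i \<times> w i))" for i
  define C' where "C' i = ((a (pv i) \<bullet> a (pv i)) * (w i \<bullet> w (pv i)) - (a (pv i) \<bullet> w (pv i)) * (w i \<bullet> a (pv i)))
      / ((a (pv i) \<times> w (pv i)) \<bullet> (a (pv i) \<times> w (pv i)))" for i
  define K where "K i = \<bar>beta (pv i)\<bar> + \<bar>beta (pv i)\<bar> * \<bar>C' i\<bar> + \<bar>C i\<bar>" for i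
  define \<Delta> where "\<Delta> = X 0 * X 1 * X 2 - Y 0 * Y 1 * Y 2"
  have Dnz: "\<Delta> \<noteq> 0" using Dl unfolding \<Delta>_def X_def Y_def pv by simp
  define M0 where "M0 = \<bar>Y 1 * Y 2\<bar> * K 0 + \<bar>X 0 * Y 1\<bar> * K 2 + \<bar>X 0 * X 2\<bar> * K 1"
  define M1 where "M1 = \<bar>Y 2 * Y 0\<bar> * K 1 + \<bar>X 1 * Y 2\<bar> * K 0 + \<bar>X 1 * X 0\<bar> * K 2"
  define M2 where "M2 = \<bar>Y 0 * Y 1\<bar> * K 2 + \<bar>X 2 * Y 0\<bar> * K 1 + \<bar>X 2 * X 1\<bar> * K 0"
  define Rn where "Rn i = norm ((a i \<bullet> a i) *\<^sub>R w i - (a i \<bullet> w i) *\<^sub>R a i) / (2 * ((a i \<times> w i) \<bullet> (a i \<times> w i)))" for i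
  define L where "L = M0 / \<bar>\<Delta>\<bar> * norm (a 0 \<times> w 0) + Rn 0 + M1 / \<bar>\<Delta>\<bar> * norm (a 1 \<times> w 1) + Rn 1
      + M2 / \<bar>\<Delta>\<bar> * norm (a 2 \<times> w 2) + Rn 2"
  show ?thesis
  proof (rule exI[of _ L], intro allI impI)
    fix z :: "nat \<Rightarrow> real^3"
    assume H: "\<forall>i<3. a i \<bullet> z i = 0 \<and> 2 * (w i \<bullet> z i) + z i \<bullet> z i = 0
            \<and> (v i + beta (pv i) *\<^sub>R z (pv i)) \<bullet> (w i + z i) = v i \<bullet> w i"
    define s where "s = norm (z 0) + norm (z 1) + norm (z 2)"
    define \<zeta> where "\<zeta> i = (z i \<bullet> (a i \<times> w i)) / ((a i \<times> w i) \<bullet> (a i \<times> w i))" for i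
    have pvl: "\<And>i. i < 3 \<Longrightarrow> pv i < 3" by (simp add: pv_def)
    have Eb: "\<And>i. i < 3 \<Longrightarrow> \<bar>\<zeta> (pv i) * X i - \<zeta> i * Y i\<bar> \<le> K i * (norm (z i) + norm (z (pv i)))\<^sup>2"
    proof -
      fix i :: nat assume i: "i < 3"
      have p: "pv i < 3" using pvl[OF i] .
      show "\<bar>\<zeta> (pv i) * X i - \<zeta> i * Y i\<bar> \<le> K i * (norm (z i) + norm (z (pv i)))\<^sup>2"
        unfolding \<zeta>_def X_def Y_def K_def C_def C'_def
        by (rule vertex_fin) (use H i p m bet in auto)
    qed
    have sq: "\<And>i. i < 3 \<Longrightarrow> (norm (z i) + norm (z (pv i)))\<^sup>2 \<le> s\<^sup>2"
    proof -
      fix i :: nat assume i: "i < 3"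
      then have "i = 0 \<or> i = 1 \<or> i = 2" by auto
      then have "norm (z i) + norm (z (pv i)) \<le> s" unfolding s_def using pv by auto
      then show "(norm (z i) + norm (z (pv i)))\<^sup>2 \<le> s\<^sup>2" by (intro sq_le) simp_all
    qed
    have K0: "\<And>i. 0 \<le> K i" unfolding K_def by simp
    have Eb2: "\<And>i. i < 3 \<Longrightarrow> \<bar>\<zeta> (pv i) * X i - \<zeta> i * Y i\<bar> \<le> K i * s\<^sup>2"
      using Eb sq K0 by (meson mult_left_mono order_trans)
    have E0: "\<bar>\<zeta> 2 * X 0 - \<zeta> 0 * Y 0\<bar> \<le> K 0 * s\<^sup>2" using Eb2[of 0] pv by simp
    have E1: "\<bar>\<zeta> 0 * X 1 - \<zeta> 1 * Y 1\<bar> \<le> K 1 * s\<^sup>2" using Eb2[of 1] pv by simp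
    have E2: "\<bar>\<zeta> 1 * X 2 - \<zeta> 2 * Y 2\<bar> \<le> K 2 * s\<^sup>2" using Eb2[of 2] pv by simp
    have z0: "\<bar>\<zeta> 0\<bar> \<le> M0 * s\<^sup>2 / \<bar>\<Delta>\<bar>"
    proof (rule div_bound[OF _ Dnz])
      have "\<zeta> 0 * \<Delta> = Y 1 * Y 2 * (\<zeta> 2 * X 0 - \<zeta> 0 * Y 0) + X 0 * Y 1 * (\<zeta> 1 * X 2 - \<zeta> 2 * Y 2) + X 0 * X 2 * (\<zeta> 0 * X 1 - \<zeta> 1 * Y 1)"
        unfolding \<Delta>_def by (rule cycle_id)
      also have "\<bar>\<dots>\<bar> \<le> M0 * s\<^sup>2" unfolding M0_def by (rule comb3[OF E0 E2 E1])
      finally show "\<bar>\<zeta> 0 * \<Delta>\<bar> \<le> M0 * s\<^sup>2" .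
    qed
    have z1: "\<bar>\<zeta> 1\<bar> \<le> M1 * s\<^sup>2 / \<bar>\<Delta>\<bar>"
    proof (rule div_bound[OF _ Dnz])
      have "\<zeta> 1 * \<Delta> = Y 2 * Y 0 * (\<zeta> 0 * X 1 - \<zeta> 1 * Y 1) + X 1 * Y 2 * (\<zeta> 2 * X 0 - \<zeta> 0 * Y 0) + X 1 * X 0 * (\<zeta> 1 * X 2 - \<zeta> 2 * Y 2)"
        unfolding \<Delta>_def using cycle_id[of "\<zeta> 1" "X 1" "X 2" "X 0" "Y 1" "Y 2" "Y 0" "\<zeta> 0" "\<zeta> 2"]
        by (simp add: algebra_simps)
      also have "\<bar>\<dots>\<bar> \<le> M1 * s\<^sup>2" unfolding M1_def by (rule comb3[OF E1 E0 E2])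
      finally show "\<bar>\<zeta> 1 * \<Delta>\<bar> \<le> M1 * s\<^sup>2" .
    qed
    have z2: "\<bar>\<zeta> 2\<bar> \<le> M2 * s\<^sup>2 / \<bar>\<Delta>\<bar>"
    proof (rule div_bound[OF _ Dnz])
      have "\<zeta> 2 * \<Delta> = Y 0 * Y 1 * (\<zeta> 1 * X 2 - \<zeta> 2 * Y 2) + X 2 * Y 0 * (\<zeta> 0 * X 1 - \<zeta> 1 * Y 1) + X 2 * X 1 * (\<zeta> 2 * X 0 - \<zeta> 0 * Y 0)"
        unfolding \<Delta>_def using cycle_id[of "\<zeta> 2" "X 2" "X 0" "X 1" "Y 2" "Y 0" "Y 1" "\<zeta> 1" "\<zeta> 0"]
        by (simp add: algebra_simps)
      also have "\<bar>\<dots>\<bar> \<le> M2 * s\<^sup>2" unfolding M2_def by (rule comb3[OF E2 E1 E0])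
      finally show "\<bar>\<zeta> 2 * \<Delta>\<bar> \<le> M2 * s\<^sup>2" .
    qed
    have zb: "\<And>i. i < 3 \<Longrightarrow> norm (z i) \<le> \<bar>\<zeta> i\<bar> * norm (a i \<times> w i) + (norm (z i))\<^sup>2 * Rn i"
      unfolding \<zeta>_def Rn_def using H m by (intro z_bound) auto
    have nz2: "\<And>i. i < 3 \<Longrightarrow> (norm (z i))\<^sup>2 \<le> s\<^sup>2"
    proof -
      fix i :: nat assume "i < 3"
      then have "i = 0 \<or> i = 1 \<or> i = 2" by auto
      then have "norm (z i) \<le> s" unfolding s_def by auto
      then show "(norm (z i))\<^sup>2 \<le> s\<^sup>2" by (intro sq_le) simp_all
    qed
    have Rn0: "\<And>i. 0 \<le> Rn i" unfolding Rn_def by simp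
    have fin: "\<And>i M. i < 3 \<Longrightarrow> \<bar>\<zeta> i\<bar> \<le> M * s\<^sup>2 / \<bar>\<Delta>\<bar> \<Longrightarrow> norm (z i) \<le> (M / \<bar>\<Delta>\<bar> * norm (a i \<times> w i) + Rn i) * s\<^sup>2"
    proof -
      fix i :: nat and M :: real assume i: "i < 3" and zi: "\<bar>\<zeta> i\<bar> \<le> M * s\<^sup>2 / \<bar>\<Delta>\<bar>"
      have "\<bar>\<zeta> i\<bar> * norm (a i \<times> w i) \<le> (M * s\<^sup>2 / \<bar>\<Delta>\<bar>) * norm (a i \<times> w i)"
        by (rule mult_right_mono[OF zi]) simp
      moreover have "(norm (z i))\<^sup>2 * Rn i \<le> s\<^sup>2 * Rn i" by (rule mult_right_mono[OF nz2[OF i] Rn0])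
      ultimately have "norm (z i) \<le> (M * s\<^sup>2 / \<bar>\<Delta>\<bar>) * norm (a i \<times> w i) + s\<^sup>2 * Rn i"
        using zb[OF i] by linarith
      then show "norm (z i) \<le> (M / \<bar>\<Delta>\<bar> * norm (a i \<times> w i) + Rn i) * s\<^sup>2"
        by (simp add: algebra_simps)
    qed
    have "norm (z 0) + norm (z 1) + norm (z 2) \<le>
        (M0 / \<bar>\<Delta>\<bar> * norm (a 0 \<times> w 0) + Rn 0) * s\<^sup>2 + (M1 / \<bar>\<Delta>\<bar> * norm (a 1 \<times> w 1) + Rn 1) * s\<^sup>2
        + (M2 / \<bar>\<Delta>\<bar> * norm (a 2 \<times> w 2) + Rn 2) * s\<^sup>2"
    proof -
      have "norm (z 0) \<le> (M0 / \<bar>\<Delta>\<bar> * norm (a 0 \<times> w 0) + Rn 0) * s\<^sup>2" by (rule fin[OF _ z0]) simp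
      moreover have "norm (z 1) \<le> (M1 / \<bar>\<Delta>\<bar> * norm (a 1 \<times> w 1) + Rn 1) * s\<^sup>2" by (rule fin[OF _ z1]) simp
      moreover have "norm (z 2) \<le> (M2 / \<bar>\<Delta>\<bar> * norm (a 2 \<times> w 2) + Rn 2) * s\<^sup>2" by (rule fin[OF _ z2]) simp
      ultimately show ?thesis by linarith
    qed
    then show "norm (z 0) + norm (z 1) + norm (z 2) \<le> L * (norm (z 0) + norm (z 1) + norm (z 2))\<^sup>2"
      unfolding L_def s_def[symmetric] by (simp add: algebra_simps)
  qed
qed



lemma flex_part:
  fixes A V W :: "nat \<Rightarrow> real^3"
  assumes planar: "planar_faces A V W"
    and vw: "\<forall>i<3. \<not> collinear {0, V i - A i, W i - A i}"
    and a_next: "\<forall>i<3. A (nx i) - A i \<notin> span {V i - A i, W i - A i}"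
    and geq: "((A 0 - A 2) \<bullet> ((V 0 - A 0) \<times> (W 0 - A 0))) * ((A 1 - A 0) \<bullet> ((V 1 - A 1) \<times> (W 1 - A 1)))
           * ((A 2 - A 1) \<bullet> ((V 2 - A 2) \<times> (W 2 - A 2)))
       \<noteq> ((A 1 - A 0) \<bullet> ((V 0 - A 0) \<times> (W 0 - A 0))) * ((A 2 - A 1) \<bullet> ((V 1 - A 1) \<times> (W 1 - A 1)))
           * ((A 0 - A 2) \<bullet> ((V 2 - A 2) \<times> (W 2 - A 2)))"
  shows "\<not> flexible A V W"
proof
  assume "flexible A V W"
  then obtain \<epsilon> :: real and Vt Wt :: "real \<Rightarrow> nat \<Rightarrow> real^3" where
    ep: "\<epsilon> > 0" and
    cont: "\<forall>i<3. continuous_on {0..\<epsilon>} (\<lambda>s. Vt s i) \<and> continuous_on {0..\<epsilon>} (\<lambda>s. Wt s i)" and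
    init: "\<forall>i<3. Vt 0 i = V i \<and> Wt 0 i = W i" and
    cong: "\<forall>s\<in>{0..\<epsilon>}. \<forall>i<3.
            face_congruent [(A i, A i), (A (nx i), A (nx i)), (V (nx i), Vt s (nx i)), (W i, Wt s i)]
          \<and> face_congruent [(V i, Vt s i), (A i, A i), (W i, Wt s i)]" and
    nc: "\<exists>s\<in>{0..\<epsilon>}. \<exists>i<3. Vt s i \<noteq> V i \<or> Wt s i \<noteq> W i"
    unfolding flexible_def by blast
  have nxv: "nx 0 = 1" "nx 1 = 2" "nx 2 = 0" by (simp_all add: nx_def)
  have nxl: "\<And>i. i < 3 \<Longrightarrow> nx i < 3" by (simp add: nx_def)
  have pvl: "\<And>i. i < 3 \<Longrightarrow> pv i < 3" by (simp add: pv_def)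
  have nxpv: "\<And>i. i < 3 \<Longrightarrow> nx (pv i) = i" by (simp add: nx_def pv_def) presburger
  define a where "a i = A (nx i) - A i" for i
  define v where "v i = V i - A i" for i
  define w where "w i = W i - A i" for i
  have nnx: "\<And>i. i < 3 \<Longrightarrow> a i \<bullet> (v i \<times> w i) \<noteq> 0"
    unfolding a_def v_def w_def using notspan vw a_next by blast
  have m: "\<forall>i<3. a i \<times> w i \<noteq> 0"
  proof (intro allI impI notI)
    fix i :: nat assume i: "i < 3" and h: "a i \<times> w i = 0"
    have "v i \<bullet> (a i \<times> w i) = - (a i \<bullet> (v i \<times> w i))" by (rule triple_swap(2))
    then show False using h nnx[OF i] by simp
  qed
  have cop: "\<And>i. i < 3 \<Longrightarrow> \<exists>\<alpha> \<beta>. V (nx i) - A i = \<alpha> *\<^sub>R a i + \<beta> *\<^sub>R w i"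
  proof -
    fix i :: nat assume i: "i < 3"
    have "coplanar {A i, A (nx i), V (nx i), W i}" using planar i unfolding planar_faces_def by blast
    moreover have "{A i, A (nx i), V (nx i), W i} = {A i, A (nx i), W i, V (nx i)}" by auto
    ultimately have c: "coplanar {A i, A (nx i), W i, V (nx i)}" by simp
    have "(A (nx i) - A i) \<times> (W i - A i) \<noteq> 0" using m i unfolding a_def w_def by blast
    then show "\<exists>\<alpha> \<beta>. V (nx i) - A i = \<alpha> *\<^sub>R a i + \<beta> *\<^sub>R w i"
      using coplanar_comb[OF c] unfolding a_def w_def by blast
  qed
  have "\<forall>i. \<exists>ab :: real \<times> real. i < 3 \<longrightarrow> V (nx i) - A i = fst ab *\<^sub>R a i + snd ab *\<^sub>R w i"
  proof
    fix i :: nat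
    show "\<exists>ab :: real \<times> real. i < 3 \<longrightarrow> V (nx i) - A i = fst ab *\<^sub>R a i + snd ab *\<^sub>R w i"
    proof (cases "i < 3")
      case True
      then obtain x y where "V (nx i) - A i = x *\<^sub>R a i + y *\<^sub>R w i" using cop by blast
      then show ?thesis by (intro exI[of _ "(x, y)"]) simp
    qed simp
  qed
  from choice[OF this] obtain f where f: "\<forall>i. i < 3 \<longrightarrow> V (nx i) - A i = fst (f i) *\<^sub>R a i + snd (f i) *\<^sub>R w i"
    by blast
  define al where "al i = fst (f i)" for i
  define be where "be i = snd (f i)" for i
  have co: "\<And>i. i < 3 \<Longrightarrow> V (nx i) - A i = al i *\<^sub>R a i + be i *\<^sub>R w i"
    using f unfolding al_def be_def by blast
  have bet: "\<forall>i<3. be (pv i) *\<^sub>R (a (pv i) \<times> w (pv i)) = a (pv i) \<times> v i"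
  proof (intro allI impI)
    fix i :: nat assume i: "i < 3"
    have p: "pv i < 3" using pvl[OF i] .
    have e: "V i - A (pv i) = al (pv i) *\<^sub>R a (pv i) + be (pv i) *\<^sub>R w (pv i)"
      using co[OF p] nxpv[OF i] by simp
    have ap: "a (pv i) = A i - A (pv i)" unfolding a_def using nxpv[OF i] by simp
    have "v i = (V i - A (pv i)) - a (pv i)" unfolding v_def ap by simp
    also have "\<dots> = (al (pv i) - 1) *\<^sub>R a (pv i) + be (pv i) *\<^sub>R w (pv i)" unfolding e by (simp add: algebra_simps)
    finally have "a (pv i) \<times> v i = a (pv i) \<times> ((al (pv i) - 1) *\<^sub>R a (pv i) + be (pv i) *\<^sub>R w (pv i))" by simp
    then show "be (pv i) *\<^sub>R (a (pv i) \<times> w (pv i)) = a (pv i) \<times> v i"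
      by (simp add: cross_add_right cross_mult_right)
  qed
  have Dl: "(a 2 \<bullet> (v 0 \<times> w 0)) * (a 0 \<bullet> (v 1 \<times> w 1)) * (a 1 \<bullet> (v 2 \<times> w 2))
        \<noteq> (a 0 \<bullet> (v 0 \<times> w 0)) * (a 1 \<bullet> (v 1 \<times> w 1)) * (a 2 \<bullet> (v 2 \<times> w 2))"
    using geq unfolding a_def v_def w_def nxv .
  obtain L where L: "\<forall>z :: nat \<Rightarrow> real^3. (\<forall>i<3. a i \<bullet> z i = 0 \<and> 2 * (w i \<bullet> z i) + z i \<bullet> z i = 0
            \<and> (v i + be (pv i) *\<^sub>R z (pv i)) \<bullet> (w i + z i) = v i \<bullet> w i)
        \<longrightarrow> norm (z 0) + norm (z 1) + norm (z 2) \<le> L * (norm (z 0) + norm (z 1) + norm (z 2))\<^sup>2"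
    using key_bound[OF m bet Dl] by blast
  define S where "S s = norm (Wt s 0 - W 0) + norm (Wt s 1 - W 1) + norm (Wt s 2 - W 2)" for s
  have perstep: "\<And>s. s \<in> {0..\<epsilon>} \<Longrightarrow> (\<forall>i<3. Vt s (nx i) - V (nx i) = be i *\<^sub>R (Wt s i - W i)) \<and> S s \<le> L * (S s)\<^sup>2"
  proof -
    fix s assume s: "s \<in> {0..\<epsilon>}"
    define z where "z i = Wt s i - W i" for i
    have sf: "\<And>i. i < 3 \<Longrightarrow> a i \<bullet> z i = 0 \<and> 2 * (w i \<bullet> z i) + z i \<bullet> z i = 0 \<and> Vt s (nx i) - V (nx i) = be i *\<^sub>R z i"
    proof -
      fix i :: nat assume i: "i < 3"
      have fc: "face_congruent [(A i, A i), (A (nx i), A (nx i)), (V (nx i), Vt s (nx i)), (W i, Wt s i)]"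
        using cong s i by blast
      have c: "V (nx i) - A i = al i *\<^sub>R (A (nx i) - A i) + be i *\<^sub>R (W i - A i)"
        using co[OF i] unfolding a_def w_def .
      show "a i \<bullet> z i = 0 \<and> 2 * (w i \<bullet> z i) + z i \<bullet> z i = 0 \<and> Vt s (nx i) - V (nx i) = be i *\<^sub>R z i"
        using side_fin[OF fc c] unfolding a_def w_def z_def by blast
    qed
    have vt: "\<And>i. i < 3 \<Longrightarrow> Vt s i - A i = v i + be (pv i) *\<^sub>R z (pv i)"
    proof -
      fix i :: nat assume i: "i < 3"
      have "Vt s (nx (pv i)) - V (nx (pv i)) = be (pv i) *\<^sub>R z (pv i)" using sf[OF pvl[OF i]] by blast
      then have "Vt s i - V i = be (pv i) *\<^sub>R z (pv i)" using nxpv[OF i] by simp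
      then have e: "Vt s i = be (pv i) *\<^sub>R z (pv i) + V i" by (metis diff_add_cancel)
      show "Vt s i - A i = v i + be (pv i) *\<^sub>R z (pv i)" unfolding v_def e by (simp add: algebra_simps)
    qed
    have hyp: "\<forall>i<3. a i \<bullet> z i = 0 \<and> 2 * (w i \<bullet> z i) + z i \<bullet> z i = 0
            \<and> (v i + be (pv i) *\<^sub>R z (pv i)) \<bullet> (w i + z i) = v i \<bullet> w i"
    proof (intro allI impI conjI)
      fix i :: nat assume i: "i < 3"
      show "a i \<bullet> z i = 0" "2 * (w i \<bullet> z i) + z i \<bullet> z i = 0" using sf[OF i] by blast+
      have fc: "face_congruent [(V i, Vt s i), (A i, A i), (W i, Wt s i)]" using cong s i by blast
      have wt: "Wt s i - A i = w i + z i" unfolding w_def z_def by simp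
      show "(v i + be (pv i) *\<^sub>R z (pv i)) \<bullet> (w i + z i) = v i \<bullet> w i"
        using corner_fin[OF fc] unfolding vt[OF i] wt v_def w_def .
    qed
    have "(\<forall>i<3. a i \<bullet> z i = 0 \<and> 2 * (w i \<bullet> z i) + z i \<bullet> z i = 0
            \<and> (v i + be (pv i) *\<^sub>R z (pv i)) \<bullet> (w i + z i) = v i \<bullet> w i)
        \<longrightarrow> norm (z 0) + norm (z 1) + norm (z 2) \<le> L * (norm (z 0) + norm (z 1) + norm (z 2))\<^sup>2"
      using L by (rule spec)
    then have "norm (z 0) + norm (z 1) + norm (z 2) \<le> L * (norm (z 0) + norm (z 1) + norm (z 2))\<^sup>2"
      using hyp by (rule mp)
    then have "S s \<le> L * (S s)\<^sup>2" unfolding S_def z_def .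
    moreover have "\<forall>i<3. Vt s (nx i) - V (nx i) = be i *\<^sub>R (Wt s i - W i)" using sf unfolding z_def by blast
    ultimately show "(\<forall>i<3. Vt s (nx i) - V (nx i) = be i *\<^sub>R (Wt s i - W i)) \<and> S s \<le> L * (S s)\<^sup>2" by blast
  qed
  have Scont: "continuous_on {0..\<epsilon>} S"
  proof -
    have c0: "continuous_on {0..\<epsilon>} (\<lambda>s. Wt s 0)" "continuous_on {0..\<epsilon>} (\<lambda>s. Wt s 1)"
      "continuous_on {0..\<epsilon>} (\<lambda>s. Wt s 2)" using cont by auto
    show ?thesis unfolding S_def by (intro continuous_intros c0)
  qed
  have S0: "S 0 = 0" unfolding S_def using init by simp
  have Snn: "\<And>s. 0 \<le> S s" unfolding S_def by simp
  have Sz: "\<And>s. s \<in> {0..\<epsilon>} \<Longrightarrow> S s = 0"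
  proof (rule ccontr)
    fix s1 assume s1: "s1 \<in> {0..\<epsilon>}" and ne: "S s1 \<noteq> 0"
    have pos: "S s1 > 0" using ne Snn[of s1] by linarith
    have b1: "S s1 \<le> L * (S s1)\<^sup>2" using perstep[OF s1] by blast
    have LS: "1 \<le> L * S s1"
    proof -
      have "S s1 * 1 \<le> S s1 * (L * S s1)" using b1 by (simp add: power2_eq_square algebra_simps)
      then show ?thesis using pos by (simp add: mult_le_cancel_left)
    qed
    have Lpos: "L > 0"
    proof (rule ccontr)
      assume "\<not> L > 0" then have "L * S s1 \<le> 0" using pos by (simp add: mult_nonpos_nonneg)
      then show False using LS by linarith
    qed
    define c where "c = 1 / (2 * L)"
    have c0: "0 < c" unfolding c_def using Lpos by simp
    have cS: "c \<le> S s1"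
    proof -
      have "1 / L \<le> S s1" using LS Lpos by (simp add: field_simps)
      moreover have "c \<le> 1 / L" unfolding c_def using Lpos by (simp add: field_simps)
      ultimately show ?thesis by linarith
    qed
    have s10: "0 \<le> s1" "s1 \<le> \<epsilon>" using s1 by auto
    have "continuous_on {0..s1} S" using Scont by (rule continuous_on_subset) (use s10 in auto)
    then obtain x where x: "0 \<le> x" "x \<le> s1" "S x = c"
      using IVT'[of S 0 c s1] S0 c0 cS s10 by auto
    have "x \<in> {0..\<epsilon>}" using x s10 by auto
    then have "c \<le> L * c\<^sup>2" using perstep x(3) by metis
    moreover have "L * c\<^sup>2 = c / 2" unfolding c_def using Lpos by (simp add: power2_eq_square field_simps)
    ultimately show False using c0 by linarith
  qed
  obtain s i where s: "s \<in> {0..\<epsilon>}" and i: "i < 3" and d: "Vt s i \<noteq> V i \<or> Wt s i \<noteq> W i" using nc by blast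
  have "S s = 0" using Sz[OF s] .
  then have Wz: "\<And>j. j < 3 \<Longrightarrow> Wt s j = W j"
  proof -
    fix j :: nat assume j: "j < 3" and "S s = 0"
    then have "norm (Wt s 0 - W 0) = 0" "norm (Wt s 1 - W 1) = 0" "norm (Wt s 2 - W 2) = 0"
      unfolding S_def using norm_ge_zero[of "Wt s 0 - W 0"] norm_ge_zero[of "Wt s 1 - W 1"]
        norm_ge_zero[of "Wt s 2 - W 2"] by linarith+
    moreover have "j = 0 \<or> j = 1 \<or> j = 2" using j by auto
    ultimately show "Wt s j = W j" by auto
  qed
  have "Vt s (nx (pv i)) - V (nx (pv i)) = be (pv i) *\<^sub>R (Wt s (pv i) - W (pv i))"
    using perstep[OF s] pvl[OF i] by blast
  then have "Vt s i = V i" using nxpv[OF i] Wz[OF pvl[OF i]] by simp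
  then show False using d Wz[OF i] by blast
qed


theorem corollary6:
  fixes A V W :: "nat \<Rightarrow> real^3"
  assumes nondeg: "\<not> collinear {A 0, A 1, A 2}"
    and planar: "planar_faces A V W"
    and vw: "\<forall>i<3. \<not> collinear {0, V i - A i, W i - A i}"
    and a_prev: "\<forall>i<3. A i - A (pv i) \<notin> span {V i - A i, W i - A i}"
    and a_next: "\<forall>i<3. A (nx i) - A i \<notin> span {V i - A i, W i - A i}"
    and nonpar: "\<forall>i<3. \<forall>j<3. i \<noteq> j \<longrightarrow> \<not> lines_parallel (lline A V W i) (lline A V W j)"
    and B_noncol: "\<not> collinear {Bpt A V W 0, Bpt A V W 1, Bpt A V W 2}"
    and A_ne_B: "\<forall>i<3. A i \<noteq> Bpt A V W (pv i) \<and> A i \<noteq> Bpt A V W i"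
  shows "\<not> inf_flexible A V W \<and> \<not> flexible A V W"
proof -
  have geq: "((A 0 - A 2) \<bullet> ((V 0 - A 0) \<times> (W 0 - A 0))) * ((A 1 - A 0) \<bullet> ((V 1 - A 1) \<times> (W 1 - A 1)))
           * ((A 2 - A 1) \<bullet> ((V 2 - A 2) \<times> (W 2 - A 2)))
       \<noteq> ((A 1 - A 0) \<bullet> ((V 0 - A 0) \<times> (W 0 - A 0))) * ((A 2 - A 1) \<bullet> ((V 1 - A 1) \<times> (W 1 - A 1)))
           * ((A 0 - A 2) \<bullet> ((V 2 - A 2) \<times> (W 2 - A 2)))"
    by (rule geom[OF nondeg vw a_prev a_next nonpar B_noncol])
  show ?thesis using inf_part[OF vw a_next geq] flex_part[OF planar vw a_next geq] by blast
qed

end
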